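(* Let $b^*=\sum_{\alpha=1}^N\int_Y\tilde b_\alpha(y)\,dy$ and, for $1\le i\le d$, let $(\omega_{i,\alpha})_{1\le\alpha\le N}\in(H^1_\#(Y))^N/(\mathbb{R}\mathbb{1})$ solve the periodic cell problem $$\tilde b_\alpha\cdot(\nabla_y\omega_{i,\alpha}+e_i)-\mathrm{div}_y\big(\tilde D_\alpha(\nabla_y\omega_{i,\alpha}+e_i)\big)+\sum_{\beta=1}^N\Pi_{\alpha\beta}\varphi^*_\alpha\varphi_\beta(\omega_{i,\beta}-\omega_{i,\alpha})=\varphi_\alpha\varphi^*_\alpha\rho_\alpha\,b^*\cdot e_i\ \text{ in }Y,\quad 1\le\alpha\le N.$$ Then the matrix $\mathcal D\in\mathbb{R}^{d\times d}$ defined by $$\mathcal D_{ij}=\sum_{\alpha=1}^N\int_Y\tilde D_\alpha(\nabla_y\omega_{i,\alpha}+e_i)\cdot(\nabla_y\omega_{j,\alpha}+e_j)\,dy-\frac12\sum_{\alpha,\beta=1}^N\int_Y\varphi^*_\alpha\varphi_\beta\Pi_{\alpha\beta}(\omega_{i,\alpha}-\omega_{i,\beta})(\omega_{j,\alpha}-\omega_{j,\beta})\,dy$$ is symmetric positive definite.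
   Context: Setting: $d\ge1$, $N\ge1$, $Y=]0,1[^d$; $Y$-periodic means $\mathbb{Z}^d$-periodic; $(e_i)$ is the canonical basis of $\mathbb{R}^d$; $\mathbb{1}=(1,\dots,1)\in\mathbb{R}^N$. For $1\le\alpha,\beta\le N$: $\rho_\alpha\in L^\infty_\#$, $\rho_\alpha\ge c_\alpha>0$; $b_\alpha\in L^\infty_\#(\mathbb{R}^d;\mathbb{R}^d)$ with $\mathrm{div}\,b_\alpha\in L^\infty_\#$; $D_\alpha\in L^\infty_\#(\mathbb{R}^d;\mathbb{R}^{d\times d})$ symmetric, $D_\alpha\xi\cdot\xi\ge c_\alpha|\xi|^2$; $\Pi$ an $N\times N$ matrix of $L^\infty_\#$ functions, $\Pi_{\alpha\beta}\le0$ for $\alpha\ne\beta$, irreducible (no partition of $\{1,\dots,N\}$ into disjoint nonempty $\mathcal B,\mathcal B'$ with $\Pi_{\alpha\beta}=0$ for $\alpha\in\mathcal B,\beta\in\mathcal B'$). $\lambda$, $(\varphi_\alpha)$, $(\varphi^*_\alpha)$ (positive, in $H^1_\#(Y)$) are the common first eigenvalue and eigenfunctions of the periodic cell problems $b_\alpha\cdot\nabla_y\varphi_\alpha-\mathrm{div}_y(D_\alpha\nabla_y\varphi_\alpha)+\sum_\beta\Pi_{\alpha\beta}\varphi_\beta=\lambda\rho_\alpha\varphi_\alpha$ and $-\mathrm{div}_y(b_\alpha\varphi^*_\alpha)-\mathrm{div}_y(D_\alpha\nabla_y\varphi^*_\alpha)+\sum_\beta\Pi_{\beta\alpha}\varphi^*_\beta=\lambda\rho_\alpha\varphi^*_\alpha$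 in $Y$, normalized by $\sum_\alpha\int_Y\rho_\alpha\varphi_\alpha\varphi^*_\alpha dy=1$. $\tilde b_\alpha=\varphi_\alpha\varphi^*_\alpha b_\alpha+\varphi_\alpha D_\alpha\nabla_y\varphi^*_\alpha-\varphi^*_\alpha D_\alpha\nabla_y\varphi_\alpha$, $\tilde D_\alpha=\varphi_\alpha\varphi^*_\alpha D_\alpha$. *)

theory Defs
  imports "HOL-Analysis.Analysis"
begin

definition cellY :: "(real^'d) set" where
  "cellY = box 0 1"

definition lattice :: "(real^'d) set" where
  "lattice = {z. \<forall>i. z $ i \<in> \<int>}"

definition periodic :: "(real^'d \<Rightarrow> 'b) \<Rightarrow> bool" where
  "periodic f \<longleftrightarrow> (\<forall>x z. z \<in> lattice \<longrightarrow> f (x + z) = f x)"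

definition Linf_per :: "(real^'d \<Rightarrow> 'b::real_normed_vector) \<Rightarrow> bool" where
  "Linf_per f \<longleftrightarrow> f \<in> borel_measurable lebesgue \<and> periodic f \<and>
     (\<exists>M. AE x in lebesgue. norm (f x) \<le> M)"

definition C1_grad :: "(real^'d \<Rightarrow> real) \<Rightarrow> (real^'d \<Rightarrow> real^'d) \<Rightarrow> bool" where
  "C1_grad v g \<longleftrightarrow> (\<forall>x. (v has_derivative (\<lambda>h. g x \<bullet> h)) (at x)) \<and> continuous_on UNIV g"

definition C1c :: "(real^'d \<Rightarrow> real) \<Rightarrow> (real^'d \<Rightarrow> real^'d) \<Rightarrow> bool" where
  "C1c v g \<longleftrightarrow> C1_grad v g \<and> (\<exists>R. \<forall>x. norm x > R \<longrightarrow> v x = 0)"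

text \<open>Y-periodic C^1 test functions (dense in H^1_#(Y)).\<close>
definition C1_per :: "(real^'d \<Rightarrow> real) \<Rightarrow> (real^'d \<Rightarrow> real^'d) \<Rightarrow> bool" where
  "C1_per v g \<longleftrightarrow> C1_grad v g \<and> periodic v"

definition weak_grad :: "(real^'d \<Rightarrow> real) \<Rightarrow> (real^'d \<Rightarrow> real^'d) \<Rightarrow> bool" where
  "weak_grad u g \<longleftrightarrow> (\<forall>\<psi> g\<psi>. C1c \<psi> g\<psi> \<longrightarrow>
      (\<integral>x. u x *\<^sub>R g\<psi> x \<partial>lebesgue) = - (\<integral>x. \<psi> x *\<^sub>R g x \<partial>lebesgue))"

definition weak_div :: "(real^'d \<Rightarrow> real^'d) \<Rightarrow> (real^'d \<Rightarrow> real) \<Rightarrow> bool" where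
  "weak_div b h \<longleftrightarrow> (\<forall>\<psi> g\<psi>. C1c \<psi> g\<psi> \<longrightarrow>
      (\<integral>x. b x \<bullet> g\<psi> x \<partial>lebesgue) = - (\<integral>x. h x * \<psi> x \<partial>lebesgue))"

definition H1_per :: "(real^'d \<Rightarrow> real) \<Rightarrow> (real^'d \<Rightarrow> real^'d) \<Rightarrow> bool" where
  "H1_per u g \<longleftrightarrow> u \<in> borel_measurable lebesgue \<and> g \<in> borel_measurable lebesgue \<and>
     periodic u \<and> periodic g \<and>
     set_integrable lebesgue cellY (\<lambda>x. (u x)\<^sup>2) \<and>
     set_integrable lebesgue cellY (\<lambda>x. (norm (g x))\<^sup>2) \<and>
     weak_grad u g"

definition btil ::
  "('n \<Rightarrow> real^'d \<Rightarrow> real^'d) \<Rightarrow> ('n \<Rightarrow> real^'d \<Rightarrow> real^'d^'d) \<Rightarrow>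
   ('n \<Rightarrow> real^'d \<Rightarrow> real) \<Rightarrow> ('n \<Rightarrow> real^'d \<Rightarrow> real^'d) \<Rightarrow>
   ('n \<Rightarrow> real^'d \<Rightarrow> real) \<Rightarrow> ('n \<Rightarrow> real^'d \<Rightarrow> real^'d) \<Rightarrow> 'n \<Rightarrow> real^'d \<Rightarrow> real^'d" where
  "btil b Dm phi gphi phis gphis a y =
     (phi a y * phis a y) *\<^sub>R b a y + phi a y *\<^sub>R (Dm a y *v gphis a y)
       - phis a y *\<^sub>R (Dm a y *v gphi a y)"

definition Dtil ::
  "('n \<Rightarrow> real^'d \<Rightarrow> real^'d^'d) \<Rightarrow> ('n \<Rightarrow> real^'d \<Rightarrow> real) \<Rightarrow> ('n \<Rightarrow> real^'d \<Rightarrow> real)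
   \<Rightarrow> 'n \<Rightarrow> real^'d \<Rightarrow> real^'d^'d" where
  "Dtil Dm phi phis a y = (phi a y * phis a y) *\<^sub>R Dm a y"

definition bstar ::
  "('n::finite \<Rightarrow> real^'d \<Rightarrow> real^'d) \<Rightarrow> ('n \<Rightarrow> real^'d \<Rightarrow> real^'d^'d) \<Rightarrow>
   ('n \<Rightarrow> real^'d \<Rightarrow> real) \<Rightarrow> ('n \<Rightarrow> real^'d \<Rightarrow> real^'d) \<Rightarrow>
   ('n \<Rightarrow> real^'d \<Rightarrow> real) \<Rightarrow> ('n \<Rightarrow> real^'d \<Rightarrow> real^'d) \<Rightarrow> real^'d" where
  "bstar b Dm phi gphi phis gphis =
     (\<Sum>a\<in>UNIV. (\<integral>y\<in>cellY. btil b Dm phi gphi phis gphis a y \<partial>lebesgue))"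

definition homD ::
  "('n::finite \<Rightarrow> real^'d \<Rightarrow> real^'d^'d) \<Rightarrow> ('n \<Rightarrow> 'n \<Rightarrow> real^'d \<Rightarrow> real) \<Rightarrow>
   ('n \<Rightarrow> real^'d \<Rightarrow> real) \<Rightarrow> ('n \<Rightarrow> real^'d \<Rightarrow> real) \<Rightarrow>
   ('d \<Rightarrow> 'n \<Rightarrow> real^'d \<Rightarrow> real) \<Rightarrow> ('d \<Rightarrow> 'n \<Rightarrow> real^'d \<Rightarrow> real^'d) \<Rightarrow> real^'d^'d" where
  "homD Dm PP phi phis om gom = (\<chi> i j.
     (\<Sum>a\<in>UNIV. (\<integral>y\<in>cellY. (Dtil Dm phi phis a y *v (gom i a y + axis i 1)) \<bullet> (gom j a y + axis j 1) \<partial>lebesgue))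
     - 1/2 * (\<Sum>a\<in>UNIV. \<Sum>c\<in>UNIV. (\<integral>y\<in>cellY. phis a y * phi c y * PP a c y
              * (om i a y - om i c y) * (om j a y - om j c y) \<partial>lebesgue)))"

definition sym_pos_def :: "real^'d^'d \<Rightarrow> bool" where
  "sym_pos_def A \<longleftrightarrow> transpose A = A \<and> (\<forall>\<xi>. \<xi> \<noteq> 0 \<longrightarrow> \<xi> \<bullet> (A *v \<xi>) > 0)"

text \<open>Irreducibility of the coupling matrix (entries compared as L^infty functions, i.e. a.e.).\<close>
definition irreducible_coupling :: "('n \<Rightarrow> 'n \<Rightarrow> real^'d \<Rightarrow> real) \<Rightarrow> bool" where
  "irreducible_coupling PP \<longleftrightarrow> \<not> (\<exists>B B'. B \<noteq> {} \<and> B' \<noteq> {} \<and> B \<inter> B' = {} \<and> B \<union> B' = UNIV \<and>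
      (\<forall>a\<in>B. \<forall>c\<in>B'. AE y in lebesgue. PP a c y = 0))"

end

theory Submission
  imports Defs
begin

definition Q1 :: "real \<Rightarrow> real" where "Q1 s = max 0 s"
definition Q2 :: "real \<Rightarrow> real" where "Q2 s = (max 0 s)^2"

lemma Q2_deriv: "(Q2 has_real_derivative 2 * Q1 s) (at s)"
proof (cases "s = 0")
  case True
  have "((\<lambda>h. (Q2 (0 + h) - Q2 0) / h) \<longlongrightarrow> 0) (at 0)"
  proof (rule tendsto_sandwich[where f="\<lambda>h::real. - \<bar>h\<bar>" and h="\<lambda>h::real. \<bar>h\<bar>"])
    show "\<forall>\<^sub>F h in at 0. - \<bar>h\<bar> \<le> (Q2 (0 + h) - Q2 0) / h"
      by (intro always_eventually allI) (auto simp: Q2_def max_def power2_eq_square divide_simps)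
    show "\<forall>\<^sub>F h in at 0. (Q2 (0 + h) - Q2 0) / h \<le> \<bar>h\<bar>"
      by (intro always_eventually allI) (auto simp: Q2_def max_def power2_eq_square divide_simps)
    have t: "((\<lambda>h::real. \<bar>h\<bar>) \<longlongrightarrow> 0) (at 0)"
      using tendsto_rabs[OF tendsto_ident_at[of 0 UNIV]] by simp
    show "((\<lambda>h::real. \<bar>h\<bar>) \<longlongrightarrow> 0) (at 0)" by (rule t)
    show "((\<lambda>h::real. - \<bar>h\<bar>) \<longlongrightarrow> 0) (at 0)"
      using tendsto_minus[OF t] by simp
  qed
  then show ?thesis using True by (simp add: DERIV_def Q1_def)
next
  case False
  show ?thesis
  proof (cases "s > 0")
    case True
    have d: "((\<lambda>x. x^2) has_real_derivative 2 * s) (at s)"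
      by (auto intro!: derivative_eq_intros)
    show ?thesis
      apply (rule has_field_derivative_transform_within_open[OF _ _ _, where S="{0<..}" and f="\<lambda>x. x^2"])
      using d True by (auto simp: Q2_def Q1_def)
  next
    case False2: False
    have d: "((\<lambda>x. 0) has_real_derivative 0) (at s)"
      by (auto intro!: derivative_eq_intros)
    show ?thesis
      apply (rule has_field_derivative_transform_within_open[OF _ _ _, where S="{..<0}" and f="\<lambda>x. 0"])
      using d False False2 by (auto simp: Q2_def Q1_def)
  qed
qed

lemma Q1_cont[continuous_intros]: "continuous_on S f \<Longrightarrow> continuous_on S (\<lambda>x. Q1 (f x))"
  unfolding Q1_def by (intro continuous_intros)

definition B1 :: "real \<Rightarrow> real" where "B1 t = Q1 t - 2 * Q1 (t-1) + Q1 (t-2)"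
definition B2 :: "real \<Rightarrow> real" where "B2 t = (Q2 t - 3 * Q2 (t-1) + 3 * Q2 (t-2) - Q2 (t-3)) / 2"

lemma B1_cont[continuous_intros]: "continuous_on S f \<Longrightarrow> continuous_on S (\<lambda>x. B1 (f x))"
  unfolding B1_def by (intro continuous_intros)

lemma B2_cont[continuous_intros]: "continuous_on S f \<Longrightarrow> continuous_on S (\<lambda>x. B2 (f x))"
  unfolding B2_def Q2_def by (intro continuous_intros) auto

lemma Q2_deriv_c: "((\<lambda>t. Q2 (t - c)) has_real_derivative 2 * Q1 (t - c)) (at t)"
proof -
  have g: "((\<lambda>t. t - c) has_real_derivative 1) (at t)" by (auto intro!: derivative_eq_intros)
  from DERIV_chain2[of Q2 "2*Q1(t-c)" "\<lambda>t. t-c" t 1 UNIV, OF _ g] Q2_deriv show ?thesis by simp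
qed

lemma B2_deriv: "(B2 has_real_derivative B1 t - B1 (t-1)) (at t)"
proof -
  have "((\<lambda>t. (Q2 (t - 0) - 3 * Q2 (t-1) + 3 * Q2 (t-2) - Q2 (t-3)) / 2) has_real_derivative
     (2 * Q1 (t - 0) - 3 * (2 * Q1 (t-1)) + 3 * (2 * Q1 (t-2)) - 2 * Q1 (t-3)) / 2) (at t)"
    by (rule DERIV_cdivide DERIV_diff DERIV_add DERIV_cmult Q2_deriv_c)+ 
  then have "(B2 has_real_derivative (2 * Q1 (t - 0) - 3 * (2 * Q1 (t - 1)) + 3 * (2 * Q1 (t - 2)) - 2 * Q1 (t - 3)) / 2) (at t)"
    by (simp add: B2_def[abs_def])
  then show ?thesis unfolding B1_def by (rule DERIV_cong) (auto simp: field_simps)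
qed

lemma B1_supp: "B1 t \<noteq> 0 \<Longrightarrow> 0 < t \<and> t < 2"
  unfolding B1_def Q1_def by (auto simp: max_def split: if_splits)

lemma B2_supp: "B2 t \<noteq> 0 \<Longrightarrow> 0 < t \<and> t < 3"
  unfolding B2_def Q2_def by (auto simp: max_def power2_eq_square algebra_simps split: if_splits)

lemma B2_nonneg: "B2 t \<ge> 0"
proof -
  consider "t \<le> 0" | "0 \<le> t" "t \<le> 1" | "1 \<le> t" "t \<le> 2" | "2 \<le> t" "t \<le> 3" | "3 \<le> t" by linarith
  then show ?thesis
  proof cases
    case 3
    have "0 \<le> (t - 1) * (2 - t)" using 3 by simp
    then show ?thesis using 3 unfolding B2_def Q2_def by (auto simp: max_def power2_eq_square algebra_simps)
  next
    case 4
    have "0 \<le> (t - 3) * (t - 3)" by simp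
    then show ?thesis using 4 unfolding B2_def Q2_def by (auto simp: max_def power2_eq_square algebra_simps)
  qed (auto simp: B2_def Q2_def max_def power2_eq_square algebra_simps)
qed

lemma B2_ge: "1 \<le> t \<Longrightarrow> t \<le> 2 \<Longrightarrow> B2 t \<ge> 1/2"
proof -
  assume a: "1 \<le> t" "t \<le> 2"
  have "0 \<le> (t - 1) * (2 - t)" using a by simp
  then show ?thesis using a unfolding B2_def Q2_def by (auto simp: max_def power2_eq_square algebra_simps)
qed

definition hb :: "real \<Rightarrow> real" where "hb s = B2 (4 * s)"
definition hb' :: "real \<Rightarrow> real" where "hb' s = 4 * (B1 (4 * s) - B1 (4 * s - 1))"
definition ak :: "real \<Rightarrow> real" where "ak t = B1 (4 * t)"
definition Fk :: "real \<Rightarrow> real" where "Fk t = (B2 (4*t) + B2 (4*t-1) + B2 (4*t-2) + B2 (4*t-3)) / 4"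
definition Fk' :: "real \<Rightarrow> real" where "Fk' t = ak t - ak (t - 1)"

lemma B2_deriv_c: "((\<lambda>t. B2 (4 * t - c)) has_real_derivative 4 * (B1 (4*t-c) - B1 (4*t-c-1))) (at t)"
proof -
  have g: "((\<lambda>t. 4*t - c) has_real_derivative 4) (at t)" by (auto intro!: derivative_eq_intros)
  from DERIV_chain2[of B2 "B1 (4*t-c) - B1 (4*t-c-1)" "\<lambda>t. 4*t-c" t 4 UNIV, OF B2_deriv g] show ?thesis
    by (rule DERIV_cong) (simp add: algebra_simps)
qed

lemma hb_deriv: "(hb has_real_derivative hb' s) (at s)"
  using B2_deriv_c[of 0 s] unfolding hb_def[abs_def] hb'_def by simp

lemma Fk_deriv: "(Fk has_real_derivative Fk' t) (at t)"
proof -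
  have "((\<lambda>t. (B2 (4*t-0) + B2 (4*t-1) + B2 (4*t-2) + B2 (4*t-3)) / 4) has_real_derivative
    (4 * (B1 (4*t-0) - B1 (4*t-0-1)) + 4 * (B1 (4*t-1) - B1 (4*t-1-1)) + 4 * (B1 (4*t-2) - B1 (4*t-2-1))
     + 4 * (B1 (4*t-3) - B1 (4*t-3-1))) / 4) (at t)"
    by (rule DERIV_cdivide DERIV_diff DERIV_add DERIV_cmult B2_deriv_c)+ 
  then have "(Fk has_real_derivative (4 * (B1 (4*t-0) - B1 (4*t-0-1)) + 4 * (B1 (4*t-1) - B1 (4*t-1-1)) + 4 * (B1 (4*t-2) - B1 (4*t-2-1))
     + 4 * (B1 (4*t-3) - B1 (4*t-3-1))) / 4) (at t)"
    by (simp add: Fk_def[abs_def])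
  then show ?thesis unfolding Fk'_def ak_def by (rule DERIV_cong) (auto simp: field_simps)
qed

lemma hb_cont[continuous_intros]: "continuous_on S hb'" "continuous_on S hb" "continuous_on S ak"
  "continuous_on S Fk" "continuous_on S Fk'"
  unfolding hb_def hb'_def ak_def Fk_def Fk'_def by (intro continuous_intros; simp)+

lemma hb_supp1: "hb s \<noteq> 0 \<Longrightarrow> 0 < s \<and> s < 1"
  unfolding hb_def using B2_supp[of "4 * s"] by auto
lemma hb_supp2: "hb' s \<noteq> 0 \<Longrightarrow> 0 < s \<and> s < 1"
proof -
  assume "hb' s \<noteq> 0"
  then have "B1 (4 * s) \<noteq> 0 \<or> B1 (4 * s - 1) \<noteq> 0" unfolding hb'_def by auto
  then show ?thesis using B1_supp[of "4 * s"] B1_supp[of "4 * s - 1"] by auto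
qed
lemma hb_supp3: "ak s \<noteq> 0 \<Longrightarrow> 0 < s \<and> s < 1/2"
  unfolding ak_def using B1_supp[of "4 * s"] by auto
lemma hb_supp4: "Fk s \<noteq> 0 \<Longrightarrow> 0 < s \<and> s < 3/2"
proof -
  assume "Fk s \<noteq> 0"
  then have "B2 (4 * s) \<noteq> 0 \<or> B2 (4 * s - 1) \<noteq> 0 \<or> B2 (4 * s - 2) \<noteq> 0 \<or> B2 (4 * s - 3) \<noteq> 0" unfolding Fk_def by auto
  then show ?thesis using B2_supp[of "4 * s"] B2_supp[of "4 * s - 1"] B2_supp[of "4 * s - 2"] B2_supp[of "4 * s - 3"] by auto
qed
lemma hb_supp5: "Fk' s \<noteq> 0 \<Longrightarrow> 0 < s \<and> s < 3/2"
proof -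
  assume "Fk' s \<noteq> 0"
  then have "ak s \<noteq> 0 \<or> ak (s - 1) \<noteq> 0" unfolding Fk'_def by auto
  then show ?thesis using hb_supp3[of s] hb_supp3[of "s - 1"] by auto
qed

lemma hb_nonneg: "hb s \<ge> 0" "Fk s \<ge> 0"
  unfolding hb_def Fk_def using B2_nonneg by (auto intro!: add_nonneg_nonneg)

lemma hb_ge: "1/4 \<le> s \<Longrightarrow> s \<le> 1/2 \<Longrightarrow> hb s \<ge> 1/8" "1/4 \<le> s \<Longrightarrow> s \<le> 1/2 \<Longrightarrow> Fk s \<ge> 1/8"
proof -
  assume a: "1/4 \<le> s" "s \<le> 1/2"
  then have b: "B2 (4 * s) \<ge> 1/2" by (intro B2_ge) auto
  then show "hb s \<ge> 1/8" unfolding hb_def by simp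
  show "Fk s \<ge> 1/8" unfolding Fk_def using b B2_nonneg[of "4 * s-1"] B2_nonneg[of "4 * s-2"] B2_nonneg[of "4 * s-3"]
    by simp
qed

definition fk :: "'d \<Rightarrow> 'd \<Rightarrow> real \<Rightarrow> real" where "fk k l = (if l = k then Fk else hb)"
definition fk' :: "'d \<Rightarrow> 'd \<Rightarrow> real \<Rightarrow> real" where "fk' k l = (if l = k then Fk' else hb')"
definition theta :: "'d::finite \<Rightarrow> real^'d \<Rightarrow> real" where
  "theta k x = (\<Prod>l\<in>UNIV. fk k l (x$l))"
definition gtheta :: "'d::finite \<Rightarrow> real^'d \<Rightarrow> real^'d" where
  "gtheta k x = (\<chi> l. fk' k l (x$l) * (\<Prod>j\<in>UNIV-{l}. fk k j (x$j)))"
definition rho0 :: "'d::finite \<Rightarrow> real^'d \<Rightarrow> real" where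
  "rho0 k x = ak (x$k) * (\<Prod>j\<in>UNIV-{k}. hb (x$j))"

lemma fk_deriv: "(fk k l has_real_derivative fk' k l s) (at s)"
  unfolding fk_def fk'_def using Fk_deriv hb_deriv by auto

lemma fk_cont[continuous_intros]: "continuous_on S (\<lambda>x. fk k l (f x))" "continuous_on S (\<lambda>x. fk' k l (f x))"
  if "continuous_on S f" for f :: "'a::topological_space \<Rightarrow> real"
  unfolding fk_def fk'_def using that
  by (auto intro: continuous_on_compose2[OF hb_cont(1)] continuous_on_compose2[OF hb_cont(2)]
    continuous_on_compose2[OF hb_cont(4)] continuous_on_compose2[OF hb_cont(5)])

lemma comp_nth_deriv:
  assumes "(g has_real_derivative g') (at (x$l))"
  shows "((\<lambda>x::real^'d. g (x$l)) has_derivative (\<lambda>h. g' * h$l)) (at x)"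
proof -
  have l: "((\<lambda>x::real^'d. x$l) has_derivative (\<lambda>h. h$l)) (at x)"
    by (rule bounded_linear.has_derivative[OF bounded_linear_vec_nth has_derivative_ident])
  show ?thesis
    using has_derivative_compose[OF l has_field_derivative_imp_has_derivative[OF assms]] by simp
qed

lemma theta_deriv: "(theta k has_derivative (\<lambda>h. gtheta k x \<bullet> h)) (at x)"
proof -
  have "((\<lambda>x. \<Prod>l\<in>UNIV. fk k l (x$l)) has_derivative
     (\<lambda>h. \<Sum>l\<in>UNIV. fk' k l (x$l) * h$l * (\<Prod>j\<in>UNIV-{l}. fk k j (x$j)))) (at x)"
    by (rule has_derivative_prod) (rule comp_nth_deriv[OF fk_deriv])
  then show ?thesis unfolding theta_def[abs_def]
    by (rule has_derivative_eq_rhs) (auto simp: gtheta_def inner_vec_def mult_ac intro!: sum.cong ext)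
qed

lemma hb_comp: "continuous_on S f \<Longrightarrow> continuous_on S (\<lambda>x. hb (f x))"
   "continuous_on S f \<Longrightarrow> continuous_on S (\<lambda>x. ak (f x))"
  by (auto intro: continuous_on_compose2[OF hb_cont(2)] continuous_on_compose2[OF hb_cont(3)])

lemma theta_cont: "continuous_on S (theta k)" "continuous_on S (gtheta k)" "continuous_on S (rho0 k)"
  unfolding theta_def[abs_def] gtheta_def[abs_def] rho0_def[abs_def]
  by (intro continuous_intros continuous_on_vec_lambda hb_comp)+

lemma Sk_prop:
  assumes "theta k x \<noteq> 0 \<or> gtheta k x \<noteq> 0"
  shows "0 < x$k \<and> x$k < 3/2 \<and> (\<forall>j. j \<noteq> k \<longrightarrow> 0 < x$j \<and> x$j < 1)"
proof -
  have "\<exists>l. \<forall>j. (j = l \<and> fk' k j (x$j) \<noteq> 0) \<or> fk k j (x$j) \<noteq> 0"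
  proof (cases "theta k x \<noteq> 0")
    case True
    then show ?thesis unfolding theta_def by auto
  next
    case False
    with assms obtain l where "gtheta k x $ l \<noteq> 0" by (auto simp: vec_eq_iff)
    then have "fk' k l (x$l) \<noteq> 0" "\<forall>j\<in>UNIV-{l}. fk k j (x$j) \<noteq> 0" unfolding gtheta_def by auto
    then show ?thesis by (intro exI[of _ l]) auto
  qed
  then obtain l where l: "\<And>j. (j = l \<and> fk' k j (x$j) \<noteq> 0) \<or> fk k j (x$j) \<noteq> 0" by blast
  have "0 < x$j \<and> x$j < (if j = k then 3/2 else 1)" for j
    using l[of j] hb_supp1[of "x$j"] hb_supp2[of "x$j"] hb_supp4[of "x$j"] hb_supp5[of "x$j"]
    unfolding fk_def fk'_def by (auto split: if_splits)
  then show ?thesis by (metis (full_types))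
qed

lemma rho0_supp: "rho0 k x \<noteq> 0 \<Longrightarrow> x \<in> cellY"
proof -
  assume a: "rho0 k x \<noteq> 0"
  then have "ak (x$k) \<noteq> 0" "\<forall>j\<in>UNIV-{k}. hb (x$j) \<noteq> 0" unfolding rho0_def by auto
  then have "0 < x$j \<and> x$j < 1" for j
    using hb_supp3[of "x$k"] hb_supp1[of "x$j"] by (cases "j = k") auto
  then show ?thesis unfolding cellY_def by (auto simp: mem_box_cart)
qed

lemma gtheta_k: "gtheta k x $ k = rho0 k x - rho0 k (x - axis k 1)"
proof -
  have "(\<Prod>j\<in>UNIV-{k}. hb ((x - axis k 1)$j)) = (\<Prod>j\<in>UNIV-{k}. hb (x$j))"
    by (rule prod.cong) (auto simp: axis_def)
  then show ?thesis unfolding gtheta_def rho0_def fk_def fk'_def Fk'_def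
    by (simp add: algebra_simps axis_def)
qed

lemma theta_nonneg: "theta k x \<ge> 0"
  unfolding theta_def fk_def using hb_nonneg by (auto intro!: prod_nonneg)

lemma theta_lower: "(\<forall>j. 1/4 \<le> x$j \<and> x$j \<le> 1/2) \<Longrightarrow> theta k (x::real^'d) \<ge> (1/8)^CARD('d)"
proof -
  assume a: "\<forall>j. 1/4 \<le> x$j \<and> x$j \<le> 1/2"
  have "(\<Prod>l\<in>(UNIV::'d set). (1/8::real)) \<le> theta k x" unfolding theta_def
    using prod_mono[of UNIV "\<lambda>_. 1/8::real" "\<lambda>l. fk k l (x$l)"] a hb_ge by (force simp: fk_def)
  then show ?thesis by simp
qed

lemma cont_meas: "continuous_on UNIV (f::real^'d \<Rightarrow> 'b::euclidean_space) \<Longrightarrow> f \<in> borel_measurable lebesgue"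
  by (simp add: measurable_completion borel_measurable_continuous_onI)

lemma theta_meas[measurable]: "theta k \<in> borel_measurable lebesgue" "gtheta k \<in> borel_measurable lebesgue"
  "rho0 k \<in> borel_measurable lebesgue"
  by (auto intro!: cont_meas theta_cont)

definition K2 :: "(real^'d) set" where "K2 = cbox 0 (vec 2)"

lemma Sk_aux: "0 < x$k \<and> x$k < 3/2 \<and> (\<forall>j. j \<noteq> k \<longrightarrow> 0 < x$j \<and> x$j < 1) \<Longrightarrow> \<forall>j. 0 < x$j \<and> x$j < (3/2::real)"
proof (intro allI)
  fix j assume a: "0 < x$k \<and> x$k < 3/2 \<and> (\<forall>j. j \<noteq> k \<longrightarrow> 0 < x$j \<and> x$j < 1)"
  show "0 < x$j \<and> x$j < 3/2"
  proof (cases "j = k")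
    case False
    with a have "0 < x$j" "x$j < 1" by auto
    then show ?thesis by linarith
  qed (use a in auto)
qed

lemma supp_K2: "theta (k::'d::finite) x \<noteq> 0 \<or> gtheta k x \<noteq> 0 \<or> rho0 k x \<noteq> 0 \<Longrightarrow> x \<in> K2"
proof -
  assume "theta k x \<noteq> 0 \<or> gtheta k x \<noteq> 0 \<or> rho0 k x \<noteq> 0"
  then have "\<forall>j. 0 < x$j \<and> x$j < 3/2"
  proof (elim disjE)
    assume "rho0 k x \<noteq> 0" then have "x \<in> cellY" by (rule rho0_supp)
    then have "\<forall>j. 0 < x$j \<and> x$j < 1" unfolding cellY_def by (auto simp: mem_box_cart)
    then show ?thesis
    proof (intro allI)
      fix j assume "\<forall>j. 0 < x$j \<and> x$j < 1"
      then have "0 < x$j" "x$j < 1" by auto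
      then show "0 < x$j \<and> x$j < 3/2" by linarith
    qed
  next
    assume "theta k x \<noteq> 0"
    then have "0 < x$k \<and> x$k < 3/2 \<and> (\<forall>j. j \<noteq> k \<longrightarrow> 0 < x$j \<and> x$j < 1)" using Sk_prop by blast
    then show ?thesis by (rule Sk_aux)
  next
    assume "gtheta k x \<noteq> 0"
    then have "0 < x$k \<and> x$k < 3/2 \<and> (\<forall>j. j \<noteq> k \<longrightarrow> 0 < x$j \<and> x$j < 1)" using Sk_prop by blast
    then show ?thesis by (rule Sk_aux)
  qed
  note * = this
  show ?thesis unfolding K2_def mem_box_cart
  proof (intro allI)
    fix i
    from * have "0 < x$i" "x$i < 3/2" by auto
    then show "(0::real^'d)$i \<le> x$i \<and> x$i \<le> vec 2 $ i" by simp
  qed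
qed

lemma theta_bounded: "\<exists>C. \<forall>x. \<bar>theta (k::'d::finite) x\<bar> \<le> C \<and> norm (gtheta k x) \<le> C \<and> \<bar>rho0 k x\<bar> \<le> C"
proof -
  have c: "compact (K2::(real^'d) set)" unfolding K2_def by simp
  have "bounded (theta k ` K2)" "bounded (gtheta k ` K2)" "bounded (rho0 k ` K2)"
    by (auto intro!: compact_imp_bounded compact_continuous_image c theta_cont)
  then obtain C1 C2 C3 where "\<forall>x\<in>K2. norm (theta k x) \<le> C1" "\<forall>x\<in>K2. norm (gtheta k x) \<le> C2" "\<forall>x\<in>K2. norm (rho0 k x) \<le> C3"
    unfolding bounded_iff by auto
  note C = this
  show ?thesis
  proof (intro exI[of _ "max 0 (max C1 (max C2 C3))"] allI)
    fix x :: "real^'d"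
    show "\<bar>theta k x\<bar> \<le> max 0 (max C1 (max C2 C3)) \<and> norm (gtheta k x) \<le> max 0 (max C1 (max C2 C3)) \<and> \<bar>rho0 k x\<bar> \<le> max 0 (max C1 (max C2 C3))"
    proof (cases "x \<in> K2")
      case True
      then show ?thesis using C by force
    next
      case False
      then have "theta k x = 0" "gtheta k x = 0" "rho0 k x = 0" using supp_K2[of k x] by auto
      then show ?thesis by simp
    qed
  qed
qed

lemma theta_C1c: "C1c (theta (k::'d::finite)) (gtheta k)"
proof -
  have "norm x \<le> real CARD('d) * 2" if "theta k x \<noteq> 0" for x :: "real^'d"
  proof -
    have "x \<in> K2" using supp_K2[of k x] that by blast
    then have "\<forall>j. \<bar>x$j\<bar> \<le> 2" unfolding K2_def by (auto simp: mem_box_cart)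
    then have "sum (\<lambda>i. \<bar>x$i\<bar>) UNIV \<le> real CARD('d) * 2"
      using sum_bounded_above[of UNIV "\<lambda>i. \<bar>x$i\<bar>" "2"] by simp
    then show ?thesis using norm_le_l1_cart[of x] by linarith
  qed
  note * = this
  show ?thesis unfolding C1c_def C1_grad_def
  proof (intro conjI allI exI[of _ "real CARD('d) * 2"] impI)
    fix x show "(theta k has_derivative (\<lambda>h. gtheta k x \<bullet> h)) (at x)" by (rule theta_deriv)
  next
    show "continuous_on UNIV (gtheta k)" by (rule theta_cont)
  next
    fix x :: "real^'d" assume "real CARD('d) * 2 < norm x" then show "theta k x = 0" using *[of x] by force
  qed
qed

lemma integrable_K2:
  fixes f :: "real^'d \<Rightarrow> 'b::euclidean_space"
  assumes "continuous_on UNIV f" "\<And>x. f x \<noteq> 0 \<Longrightarrow> x \<in> K2"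
  shows "integrable lebesgue f"
proof -
  have "integrable lborel (\<lambda>x. indicator K2 x *\<^sub>R f x)"
    by (rule borel_integrable_compact) (auto simp: K2_def intro: continuous_on_subset[OF assms(1)])
  moreover have "(\<lambda>x. indicator K2 x *\<^sub>R f x) = f" using assms(2)
    by (auto simp: indicator_def fun_eq_iff)
  ultimately have "integrable lborel f" by simp
  then show ?thesis
    by (subst integrable_completion) (auto intro: borel_measurable_continuous_onI assms)
qed

lemma theta_integrable: "integrable lebesgue (theta k)"
  using supp_K2 theta_cont by (auto intro!: integrable_K2)

lemma theta_pos: "(\<integral>x. theta (k::'d::finite) x \<partial>lebesgue) > 0"
proof -
  define C :: "(real^'d) set" where "C = cbox (vec (1/4)) (vec (1/2))"
  have "(\<integral>x. indicator C x * (1/8::real)^CARD('d) \<partial>lebesgue) \<le> (\<integral>x. theta k x \<partial>lebesgue)"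
  proof (rule integral_mono)
    show "integrable lebesgue (\<lambda>x. indicator C x * (1/8::real)^CARD('d))"
      unfolding C_def using emeasure_lborel_cbox_finite[of "vec (1/4)" "vec (1/2)::real^'d"]
      by (intro integrable_mult_left) (simp add: integrable_indicator_iff)
    show "integrable lebesgue (theta k)" by (rule theta_integrable)
    fix x show "indicator C x * (1/8::real)^CARD('d) \<le> theta k x"
      using theta_lower[of x k] theta_nonneg[of k x] unfolding C_def
      by (auto simp: indicator_def mem_box_cart)
  qed
  moreover have "(\<integral>x. indicator C x * (1/8::real)^CARD('d) \<partial>lebesgue) = measure lebesgue C * (1/8)^CARD('d)"
    unfolding C_def by simp
  moreover have "measure lebesgue C > 0"
  proof -
    have "vec (1/4) \<in> C" unfolding C_def by (auto simp: mem_box_cart)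
    then have "C \<noteq> {}" by auto
    then have "measure lebesgue C = (\<Prod>i\<in>(UNIV::'d set). 1/2 - 1/4)"
      unfolding C_def by (simp add: content_cbox_cart)
    then show ?thesis by simp
  qed
  ultimately show ?thesis
    by (metis (no_types, lifting) divide_pos_pos order_less_le_trans mult_pos_pos zero_less_numeral zero_less_one zero_less_power)
qed

lemma lebesgue_transl: "distr lebesgue lebesgue (\<lambda>x. c + x) = (lebesgue :: ('a::euclidean_space) measure)"
  using lebesgue_affine_euclidean[of "\<lambda>_. 1" c] by (simp add: euclidean_representation density_1)

lemma transl_meas: "(\<lambda>x. c + x) \<in> lebesgue \<rightarrow>\<^sub>M (lebesgue :: ('a::euclidean_space) measure)"
  using lebesgue_affine_measurable[of "\<lambda>_. 1" c] by (simp add: euclidean_representation)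

lemma integral_transl:
  fixes f :: "'a::euclidean_space \<Rightarrow> 'b::{banach, second_countable_topology}"
  assumes "f \<in> borel_measurable lebesgue"
  shows "(\<integral>x. f (c + x) \<partial>lebesgue) = (\<integral>x. f x \<partial>lebesgue)"
  using integral_distr[OF transl_meas assms, of c] by (simp add: lebesgue_transl)

lemma integrable_transl:
  fixes f :: "'a::euclidean_space \<Rightarrow> 'b::{banach, second_countable_topology}"
  assumes "f \<in> borel_measurable lebesgue"
  shows "integrable lebesgue (\<lambda>x. f (c + x)) \<longleftrightarrow> integrable lebesgue f"
  using integrable_distr_eq[OF transl_meas assms, of c] by (simp add: lebesgue_transl)

lemma AE_transl:
  assumes "AE x in lebesgue. P x"
  shows "AE x in (lebesgue :: ('a::euclidean_space) measure). P (c + x)"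
proof -
  have "AE x in distr lebesgue lebesgue (\<lambda>x. c + x). P x" by (subst lebesgue_transl) (rule assms)
  then show ?thesis by (rule AE_distrD[OF transl_meas])
qed

lemma lattice_axis: "axis k 1 \<in> lattice" "- axis k 1 \<in> lattice"
  unfolding lattice_def by (auto simp: axis_def)

lemma periodic_shift: "periodic f \<Longrightarrow> f (x - axis k 1) = f x" "periodic f \<Longrightarrow> f (axis k 1 + x) = f x"
  "periodic f \<Longrightarrow> f (- axis k 1 + x) = f x"
  unfolding periodic_def using lattice_axis
  by (metis add.commute diff_conv_add_uminus)+

lemma cellY_sets[measurable]: "cellY \<in> sets lebesgue"
  unfolding cellY_def by simp

lemma hyper_null: "{x::real^'d. x$k = 1} \<in> null_sets lebesgue"
proof -
  have "negligible {x::real^'d. x \<bullet> axis k 1 = 1}"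
    by (rule negligible_standard_hyperplane) (auto simp: Basis_vec_def)
  then show ?thesis by (simp add: negligible_iff_null_sets inner_axis)
qed

lemma AE_hyper: "AE x in lebesgue. (x::real^'d)$k \<noteq> 1"
  using hyper_null[of k] by (rule AE_I') auto

definition region :: "'d \<Rightarrow> real^'d \<Rightarrow> bool" where
  "region k x \<longleftrightarrow> x \<in> cellY \<or> x - axis k 1 \<in> cellY \<or> x$k = 1"

lemma Sk_region:
  fixes k :: "'d::finite" and x :: "real^'d"
  assumes "theta k x \<noteq> 0 \<or> gtheta k x \<noteq> 0 \<or> rho0 k x \<noteq> 0"
  shows "region k x"
proof (cases "rho0 k x \<noteq> 0")
  case True then show ?thesis using rho0_supp region_def by blast
next
  case False
  then have a: "0 < x$k \<and> x$k < 3/2 \<and> (\<forall>j. j \<noteq> k \<longrightarrow> 0 < x$j \<and> x$j < 1)"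
    using Sk_prop assms by blast
  consider "x$k < 1" | "x$k = 1" | "x$k > 1" by linarith
  then show ?thesis
  proof cases
    case 1
    have "x \<in> cellY" unfolding cellY_def mem_box_cart
    proof
      fix j show "(0::real^'d)$j < x$j \<and> x$j < (1::real^'d)$j" using a 1 by (cases "j = k") auto
    qed
    then show ?thesis unfolding region_def by blast
  next
    case 3
    have "x - axis k 1 \<in> cellY" unfolding cellY_def mem_box_cart
    proof
      fix j show "(0::real^'d)$j < (x - axis k 1)$j \<and> (x - axis k 1)$j < (1::real^'d)$j"
        using a 3 by (cases "j = k") (auto simp: axis_def)
    qed
    then show ?thesis unfolding region_def by blast
  qed (auto simp: region_def)
qed

lemma int_loc:
  fixes f :: "real^'d \<Rightarrow> 'b::{banach, second_countable_topology}"
    and h :: "real^'d \<Rightarrow> 'c::{banach, second_countable_topology}"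
  assumes f: "f \<in> borel_measurable lebesgue" "periodic f" "set_integrable lebesgue cellY f"
    and h: "h \<in> borel_measurable lebesgue" "\<And>x. norm (h x) \<le> C * norm (f x)"
      "\<And>x. h x \<noteq> 0 \<Longrightarrow> region k x"
  shows "integrable lebesgue h"
proof -
  define g1 where "g1 x = indicator cellY x *\<^sub>R f x" for x
  have g1m[measurable]: "g1 \<in> borel_measurable lebesgue" unfolding g1_def using f(1) by measurable
  have i1: "integrable lebesgue g1" using f(3) unfolding g1_def set_integrable_def by simp
  define g2 where "g2 x = g1 (- axis k 1 + x)" for x
  have i2: "integrable lebesgue g2" unfolding g2_def using integrable_transl[OF g1m, of "- axis k 1"] i1 by blast
  have g2m: "g2 \<in> borel_measurable lebesgue" using i2 by (rule borel_measurable_integrable)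
  have "integrable lebesgue (\<lambda>x. \<bar>C\<bar> * (norm (g1 x) + norm (g2 x)))"
    using i1 i2 by (intro integrable_mult_right Bochner_Integration.integrable_add integrable_norm)
  then show ?thesis
  proof (rule Bochner_Integration.integrable_bound)
    show "h \<in> borel_measurable lebesgue" by (rule h(1))
    show "AE x in lebesgue. norm (h x) \<le> norm (\<bar>C\<bar> * (norm (g1 x) + norm (g2 x)))"
      using AE_hyper[of k]
    proof eventually_elim
      case (elim x)
      have C: "norm (h x) \<le> \<bar>C\<bar> * norm (f x)"
        using h(2)[of x] by (meson abs_ge_self mult_right_mono norm_ge_zero order_trans)
      show ?case
      proof (cases "h x = 0")
        case True
        then show ?thesis by simp
      next
        case False
        then have r: "x \<in> cellY \<or> x - axis k 1 \<in> cellY" using h(3) elim unfolding region_def by blast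
        then have "norm (f x) \<le> norm (g1 x) + norm (g2 x)"
        proof
          assume "x \<in> cellY" then show ?thesis by (simp add: g1_def)
        next
          assume "x - axis k 1 \<in> cellY"
          then have "g2 x = f x" unfolding g2_def g1_def using periodic_shift(3)[OF f(2)] by simp
          then show ?thesis by simp
        qed
        then have "\<bar>C\<bar> * norm (f x) \<le> \<bar>C\<bar> * (norm (g1 x) + norm (g2 x))" by (simp add: mult_left_mono)
        then show ?thesis using C by simp
      qed
    qed
  qed
qed

lemma AE_ext:
  assumes "periodic G" "AE x in lebesgue. x \<in> cellY \<longrightarrow> G x = c"
  shows "AE x in lebesgue. (x \<in> cellY \<or> x - axis k 1 \<in> cellY) \<longrightarrow> G x = c"
proof -
  have "AE x in lebesgue. - axis k 1 + x \<in> cellY \<longrightarrow> G (- axis k 1 + x) = c"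
    using AE_transl[OF assms(2)] .
  then show ?thesis using assms(2)
    by eventually_elim (auto simp: periodic_shift(1,3)[OF assms(1)])
qed

lemma core:
  fixes u :: "real^'d \<Rightarrow> real" and G :: "real^'d \<Rightarrow> real^'d" and k :: 'd
  assumes u: "u \<in> borel_measurable lebesgue" "periodic u" "set_integrable lebesgue cellY u"
      and G: "G \<in> borel_measurable lebesgue" "periodic G" "set_integrable lebesgue cellY G"
      and Gc: "AE x in lebesgue. x \<in> cellY \<longrightarrow> G x = c"
      and wg: "(\<integral>x. u x *\<^sub>R gtheta k x \<partial>lebesgue) = - (\<integral>x. theta k x *\<^sub>R G x \<partial>lebesgue)"
  shows "c $ k = 0"
proof -
  obtain Cb where bnd: "\<And>x. \<bar>theta k x\<bar> \<le> Cb \<and> norm (gtheta k x) \<le> Cb \<and> \<bar>rho0 k x\<bar> \<le> Cb"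
    using theta_bounded[of k] by blast
  note [measurable] = u(1) G(1)
  define e :: "real^'d" where "e = axis k 1"
  have I1: "integrable lebesgue (\<lambda>x. u x *\<^sub>R gtheta k x)"
  proof (rule int_loc[OF u, of _ Cb k])
    show "(\<lambda>x. u x *\<^sub>R gtheta k x) \<in> borel_measurable lebesgue" by measurable
    fix x
    show "norm (u x *\<^sub>R gtheta k x) \<le> Cb * norm (u x)"
      using bnd[of x] mult_left_mono[of "norm (gtheta k x)" Cb "\<bar>u x\<bar>"] by (simp add: mult.commute)
    show "u x *\<^sub>R gtheta k x \<noteq> 0 \<Longrightarrow> region k x" using Sk_region[of k x] by auto
  qed
  have I2: "integrable lebesgue (\<lambda>x. u x * rho0 k x)"
  proof (rule int_loc[OF u, of _ Cb k])
    show "(\<lambda>x. u x * rho0 k x) \<in> borel_measurable lebesgue" by measurable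
    fix x
    show "norm (u x * rho0 k x) \<le> Cb * norm (u x)"
      using bnd[of x] mult_left_mono[of "\<bar>rho0 k x\<bar>" Cb "\<bar>u x\<bar>"] by (simp add: abs_mult mult.commute)
    show "u x * rho0 k x \<noteq> 0 \<Longrightarrow> region k x" using Sk_region[of k x] by auto
  qed
  have rm: "(\<lambda>x. rho0 k (x - e)) \<in> borel_measurable lebesgue"
  proof -
    have "continuous_on UNIV (\<lambda>x. rho0 k (x - e))"
      by (intro continuous_on_compose2[OF theta_cont(3)] continuous_intros) auto
    then show ?thesis by (rule cont_meas)
  qed
  have I3: "integrable lebesgue (\<lambda>x. u x * rho0 k (x - e))"
  proof (rule int_loc[OF u, of _ Cb k])
    show "(\<lambda>x. u x * rho0 k (x - e)) \<in> borel_measurable lebesgue" using rm by measurable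
    fix x
    show "norm (u x * rho0 k (x - e)) \<le> Cb * norm (u x)"
      using bnd[of "x - e"] mult_left_mono[of "\<bar>rho0 k (x - e)\<bar>" Cb "\<bar>u x\<bar>"] by (simp add: abs_mult mult.commute)
    show "u x * rho0 k (x - e) \<noteq> 0 \<Longrightarrow> region k x"
      using rho0_supp[of k "x - e"] unfolding region_def e_def by auto
  qed
  have I4: "integrable lebesgue (\<lambda>x. theta k x *\<^sub>R G x)"
  proof (rule int_loc[OF G, of _ Cb k])
    show "(\<lambda>x. theta k x *\<^sub>R G x) \<in> borel_measurable lebesgue" by measurable
    fix x
    show "norm (theta k x *\<^sub>R G x) \<le> Cb * norm (G x)"
      using bnd[of x] mult_right_mono[of "\<bar>theta k x\<bar>" Cb "norm (G x)"] by simp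
    show "theta k x *\<^sub>R G x \<noteq> 0 \<Longrightarrow> region k x" using Sk_region[of k x] by auto
  qed
  have "(\<integral>x. u x *\<^sub>R gtheta k x \<partial>lebesgue) $ k = (\<integral>x. (u x *\<^sub>R gtheta k x) \<bullet> axis k 1 \<partial>lebesgue)"
    using integral_inner_left[OF I1, of "axis k 1"] by (simp add: inner_axis)
  also have "\<dots> = (\<integral>x. u x * rho0 k x - u x * rho0 k (x - e) \<partial>lebesgue)"
    by (simp add: inner_axis gtheta_k e_def right_diff_distrib)
  also have "\<dots> = (\<integral>x. u x * rho0 k x \<partial>lebesgue) - (\<integral>x. u x * rho0 k (x - e) \<partial>lebesgue)"
    by (rule Bochner_Integration.integral_diff[OF I2 I3])
  also have "(\<integral>x. u x * rho0 k (x - e) \<partial>lebesgue) = (\<integral>x. u (e + x) * rho0 k ((e + x) - e) \<partial>lebesgue)"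
    by (rule integral_transl[symmetric]) (use rm in measurable)
  also have "\<dots> = (\<integral>x. u x * rho0 k x \<partial>lebesgue)"
    by (simp add: e_def periodic_shift(2)[OF u(2)])
  finally have L: "(\<integral>x. u x *\<^sub>R gtheta k x \<partial>lebesgue) $ k = 0" by simp
  have "(\<integral>x. theta k x *\<^sub>R G x \<partial>lebesgue) = (\<integral>x. theta k x *\<^sub>R c \<partial>lebesgue)"
  proof (rule integral_cong_AE)
    show "(\<lambda>x. theta k x *\<^sub>R G x) \<in> borel_measurable lebesgue" by measurable
    show "(\<lambda>x. theta k x *\<^sub>R c) \<in> borel_measurable lebesgue" by measurable
    show "AE x in lebesgue. theta k x *\<^sub>R G x = theta k x *\<^sub>R c"
      using AE_ext[OF G(2) Gc, of k] AE_hyper[of k]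
    proof eventually_elim
      case (elim x)
      show ?case
      proof (cases "theta k x = 0")
        case False
        then have "region k x" using Sk_region[of k x] by auto
        then have "G x = c" using elim unfolding region_def by blast
        then show ?thesis by simp
      qed simp
    qed
  qed
  also have "\<dots> = (\<integral>x. theta k x \<partial>lebesgue) *\<^sub>R c" by (rule integral_scaleR_left) (rule theta_integrable)
  finally have "(\<integral>x. theta k x \<partial>lebesgue) * c $ k = 0" using wg L by simp
  then show ?thesis using theta_pos[of k] by simp
qed

lemma vec_nth_meas[measurable (raw)]: fixes f :: "'m \<Rightarrow> real^'n" shows "f \<in> borel_measurable M \<Longrightarrow> (\<lambda>x. f x $ i) \<in> borel_measurable M"
  by (rule measurable_compose[OF _ borel_measurable_nth])
lemma bmn2: "(\<lambda>x::real^'n^'k. x $ i) \<in> borel_measurable borel"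
  by (intro borel_measurable_continuous_onI continuous_intros)
lemma vec_nth_meas2[measurable (raw)]: fixes f :: "'m \<Rightarrow> real^'n^'k" shows "f \<in> borel_measurable M \<Longrightarrow> (\<lambda>x. f x $ i) \<in> borel_measurable M"
  by (rule measurable_compose[OF _ bmn2])
lemma mv_meas[measurable (raw)]: "(A::'a \<Rightarrow> real^'d^'d) \<in> borel_measurable M \<Longrightarrow> v \<in> borel_measurable M  \<Longrightarrow> (\<lambda>y. (A y *v v y)) \<in> borel_measurable M"
  apply (subst borel_measurable_euclidean_space) 
  apply (auto simp: Basis_vec_def inner_axis cart_eq_inner_axis[symmetric] matrix_vector_mult_def)
  by measurable

lemma mvi: "(A *v v) \<bullet> w = (\<Sum>k\<in>UNIV. \<Sum>l\<in>UNIV. A$k$l * v$l * w$k)"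
  by (simp add: matrix_vector_mult_def inner_vec_def sum_distrib_left sum_distrib_right mult_ac)

lemma mv_bound: "\<bar>(A *v v) \<bullet> w\<bar> \<le> real CARD('d)^2 * norm (A::real^'d^'d) * norm v * norm w"
proof -
  have "\<bar>(A *v v) \<bullet> w\<bar> \<le> (\<Sum>k\<in>(UNIV::'d set). \<Sum>l\<in>(UNIV::'d set). \<bar>A$k$l * v$l * w$k\<bar>)"
    unfolding mvi by (rule order_trans[OF sum_abs]) (intro sum_mono sum_abs)
  also have "\<dots> \<le> (\<Sum>k\<in>(UNIV::'d set). \<Sum>l\<in>(UNIV::'d set). norm A * norm v * norm w)"
  proof (intro sum_mono)
    fix k l
    have "\<bar>A$k$l\<bar> \<le> norm A" using component_le_norm_cart[of "A$k" l] Finite_Cartesian_Product.norm_nth_le[of A k]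
      by (simp add: order_trans)
    moreover have "\<bar>v$l\<bar> \<le> norm v" "\<bar>w$k\<bar> \<le> norm w" by (simp_all add: component_le_norm_cart)
    ultimately show "\<bar>A$k$l * v$l * w$k\<bar> \<le> norm A * norm v * norm w"
      by (simp add: abs_mult mult_mono')
  qed
  also have "\<dots> = real CARD('d)^2 * norm A * norm v * norm w" by (simp add: power2_eq_square)
  finally show ?thesis .
qed

lemma set_int_const: "set_integrable lebesgue cellY (\<lambda>_. c::real)"
  unfolding set_integrable_def cellY_def
  using emeasure_lborel_box_finite[of "0::real^'d" 1]
  by (intro integrable_scaleR_left) (simp add: integrable_indicator_iff)

lemma set_int_L1:
  fixes g :: "real^'d \<Rightarrow> 'b::euclidean_space"
  assumes "g \<in> borel_measurable lebesgue" "set_integrable lebesgue cellY (\<lambda>y. (norm (g y))^2)"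
  shows "set_integrable lebesgue cellY g"
proof (rule set_integrable_bound[of _ _ "\<lambda>y. (norm (g y))^2 + 1"])
  show "set_integrable lebesgue cellY (\<lambda>y. (norm (g y))^2 + 1)"
    using assms(2) set_int_const by (rule set_integral_add)
  show "set_borel_measurable lebesgue cellY g" unfolding set_borel_measurable_def using assms(1) by measurable
  show "AE x in lebesgue. x \<in> cellY \<longrightarrow> norm (g x) \<le> norm ((norm (g x))^2 + 1)"
  proof (rule AE_I2, rule impI)
    fix x
    have "0 \<le> (norm (g x) - 1)^2" "0 \<le> norm (g x)" by simp_all
    then have "2 * norm (g x) \<le> 1 + norm (g x) * norm (g x)"
      unfolding power2_eq_square by (simp add: algebra_simps)
    then have "norm (g x) \<le> (norm (g x))^2 + 1"
      unfolding power2_eq_square using \<open>0 \<le> norm (g x)\<close> by linarith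
    then show "norm (g x) \<le> norm ((norm (g x))^2 + 1)" by simp
  qed
qed

lemma set_int_sq_shift:
  fixes g :: "real^'d \<Rightarrow> 'b::euclidean_space"
  assumes "g \<in> borel_measurable lebesgue" "set_integrable lebesgue cellY (\<lambda>y. (norm (g y))^2)"
    "set_integrable lebesgue cellY (\<lambda>y. (norm (h y))^2)" "h \<in> borel_measurable lebesgue"
  shows "set_integrable lebesgue cellY (\<lambda>y. (norm (g y + h y))^2)"
proof (rule set_integrable_bound[of _ _ "\<lambda>y. 2 * (norm (g y))^2 + 2 * (norm (h y))^2"])
  show "set_integrable lebesgue cellY (\<lambda>y. 2 * (norm (g y))^2 + 2 * (norm (h y))^2)"
    using assms(2,3) by (intro set_integral_add set_integrable_mult_right)
  show "set_borel_measurable lebesgue cellY (\<lambda>y. (norm (g y + h y))^2)"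
    unfolding set_borel_measurable_def using assms(1,4) by measurable
  show "AE x in lebesgue. x \<in> cellY \<longrightarrow> norm ((norm (g x + h x))^2) \<le> norm (2 * (norm (g x))^2 + 2 * (norm (h x))^2)"
  proof (rule AE_I2, rule impI)
    fix x
    have t: "norm (g x + h x) \<le> norm (g x) + norm (h x)" by (rule norm_triangle_ineq)
    have "(norm (g x + h x))^2 \<le> (norm (g x) + norm (h x))^2"
      using t by (simp add: power_mono)
    also have "\<dots> \<le> 2 * (norm (g x))^2 + 2 * (norm (h x))^2"
    proof -
      have "0 \<le> (norm (g x) - norm (h x))^2" by simp
      then show ?thesis unfolding power2_eq_square by (simp add: algebra_simps)
    qed
    finally show "norm ((norm (g x + h x))^2) \<le> norm (2 * (norm (g x))^2 + 2 * (norm (h x))^2)" by simp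
  qed
qed

lemma prod_le_sq: "a * b \<le> a^2 + b^2" if "(0::real) \<le> a" "0 \<le> b"
proof -
  have "0 \<le> (a - b)^2" "0 \<le> a * b" using that by simp_all
  then show ?thesis unfolding power2_eq_square by (simp add: algebra_simps)
qed

lemma bil_int:
  fixes A :: "real^'d \<Rightarrow> real^'d^'d"
  assumes [measurable]: "A \<in> borel_measurable lebesgue" "v \<in> borel_measurable lebesgue" "w \<in> borel_measurable lebesgue"
    and B: "AE y in lebesgue. norm (A y) \<le> B"
    and iv: "set_integrable lebesgue cellY (\<lambda>y. (norm (v y))^2)"
    and iw: "set_integrable lebesgue cellY (\<lambda>y. (norm (w y))^2)"
  shows "set_integrable lebesgue cellY (\<lambda>y. (A y *v v y) \<bullet> w y)"
proof (rule set_integrable_bound[of _ _ "\<lambda>y. real CARD('d)^2 * \<bar>B\<bar> * ((norm (v y))^2 + (norm (w y))^2)"])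
  show "set_integrable lebesgue cellY (\<lambda>y. real CARD('d)^2 * \<bar>B\<bar> * ((norm (v y))^2 + (norm (w y))^2))"
    using iv iw by (intro set_integrable_mult_right set_integral_add)
  show "set_borel_measurable lebesgue cellY (\<lambda>y. (A y *v v y) \<bullet> w y)"
    unfolding set_borel_measurable_def by measurable
  show "AE x in lebesgue. x \<in> cellY \<longrightarrow> norm ((A x *v v x) \<bullet> w x) \<le> norm (real CARD('d)^2 * \<bar>B\<bar> * ((norm (v x))^2 + (norm (w x))^2))"
    using B
  proof eventually_elim
    case (elim x)
    have "\<bar>(A x *v v x) \<bullet> w x\<bar> \<le> real CARD('d)^2 * norm (A x) * (norm (v x) * norm (w x))"
      using mv_bound[of "A x" "v x" "w x"] by (simp add: mult_ac)
    also have "\<dots> \<le> real CARD('d)^2 * \<bar>B\<bar> * ((norm (v x))^2 + (norm (w x))^2)"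
      using elim by (intro mult_mono prod_le_sq) auto
    finally show ?case by simp
  qed
qed

lemma tri_int:
  fixes P f1 f2 :: "real^'d \<Rightarrow> real"
  assumes [measurable]: "P \<in> borel_measurable lebesgue" "f1 \<in> borel_measurable lebesgue" "f2 \<in> borel_measurable lebesgue"
    and B: "AE y in lebesgue. \<bar>P y\<bar> \<le> B"
    and i1: "set_integrable lebesgue cellY (\<lambda>y. (norm (f1 y))^2)"
    and i2: "set_integrable lebesgue cellY (\<lambda>y. (norm (f2 y))^2)"
  shows "set_integrable lebesgue cellY (\<lambda>y. P y * f1 y * f2 y)"
proof (rule set_integrable_bound[of _ _ "\<lambda>y. \<bar>B\<bar> * ((norm (f1 y))^2 + (norm (f2 y))^2)"])
  show "set_integrable lebesgue cellY (\<lambda>y. \<bar>B\<bar> * ((norm (f1 y))^2 + (norm (f2 y))^2))"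
    using i1 i2 by (intro set_integrable_mult_right set_integral_add)
  show "set_borel_measurable lebesgue cellY (\<lambda>y. P y * f1 y * f2 y)"
    unfolding set_borel_measurable_def by measurable
  show "AE x in lebesgue. x \<in> cellY \<longrightarrow> norm (P x * f1 x * f2 x) \<le> norm (\<bar>B\<bar> * ((norm (f1 x))^2 + (norm (f2 x))^2))"
    using B
  proof eventually_elim
    case (elim x)
    have "\<bar>P x * f1 x * f2 x\<bar> = \<bar>P x\<bar> * (norm (f1 x) * norm (f2 x))" by (simp add: abs_mult)
    also have "\<dots> \<le> \<bar>B\<bar> * ((norm (f1 x))^2 + (norm (f2 x))^2)"
      using elim by (intro mult_mono prod_le_sq) auto
    finally show ?case by simp
  qed
qed

lemma set_int_lin:
  fixes f :: "'i \<Rightarrow> 'a \<Rightarrow> real"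
  assumes "finite I" "\<And>i. i \<in> I \<Longrightarrow> set_integrable M A (f i)"
  shows "(\<Sum>i\<in>I. c i * (\<integral>y\<in>A. f i y \<partial>M)) = (\<integral>y\<in>A. (\<Sum>i\<in>I. c i * f i y) \<partial>M)"
proof -
  have "(\<integral>y\<in>A. (\<Sum>i\<in>I. c i * f i y) \<partial>M) = (\<integral>y. (\<Sum>i\<in>I. c i * (indicator A y * f i y)) \<partial>M)"
    unfolding set_lebesgue_integral_def by (simp add: sum_distrib_left mult_ac)
  also have "\<dots> = (\<Sum>i\<in>I. (\<integral>y. c i * (indicator A y * f i y) \<partial>M))"
    by (rule Bochner_Integration.integral_sum) (use assms(2) in \<open>auto simp: set_integrable_def\<close>)
  also have "\<dots> = (\<Sum>i\<in>I. c i * (\<integral>y\<in>A. f i y \<partial>M))"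
    unfolding set_lebesgue_integral_def by simp
  finally show ?thesis by simp
qed

lemma set_int_lin2:
  fixes f :: "'i \<Rightarrow> 'j \<Rightarrow> 'a \<Rightarrow> real"
  assumes "finite I" "finite J" "\<And>i j. i \<in> I \<Longrightarrow> j \<in> J \<Longrightarrow> set_integrable M A (f i j)"
  shows "(\<Sum>i\<in>I. \<Sum>j\<in>J. c i j * (\<integral>y\<in>A. f i j y \<partial>M)) = (\<integral>y\<in>A. (\<Sum>i\<in>I. \<Sum>j\<in>J. c i j * f i j y) \<partial>M)"
proof -
  have "(\<Sum>i\<in>I. \<Sum>j\<in>J. c i j * (\<integral>y\<in>A. f i j y \<partial>M)) = (\<Sum>p\<in>I\<times>J. (\<lambda>(i,j). c i j) p * (\<integral>y\<in>A. (\<lambda>(i,j). f i j) p y \<partial>M))"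
    by (simp add: sum.cartesian_product case_prod_beta')
  also have "\<dots> = (\<integral>y\<in>A. (\<Sum>p\<in>I\<times>J. (\<lambda>(i,j). c i j) p * (\<lambda>(i,j). f i j) p y) \<partial>M)"
    by (rule set_int_lin) (use assms in auto)
  also have "\<dots> = (\<integral>y\<in>A. (\<Sum>i\<in>I. \<Sum>j\<in>J. c i j * f i j y) \<partial>M)"
    by (simp add: sum.cartesian_product case_prod_beta')
  finally show ?thesis .
qed

lemma mv_sum: "finite I \<Longrightarrow> (A::real^'d^'d) *v (\<Sum>i\<in>I. c i *\<^sub>R u i) = (\<Sum>i\<in>I. c i *\<^sub>R (A *v u i))"
  by (induct I rule: finite_induct) (auto simp: matrix_vector_right_distrib matrix_vector_mult_scaleR)

lemma quad_mv:
  assumes "finite I"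
  shows "(\<Sum>i\<in>I. \<Sum>j\<in>I. c i * c j * (((A::real^'d^'d) *v u i) \<bullet> u j)) = (A *v (\<Sum>i\<in>I. c i *\<^sub>R u i)) \<bullet> (\<Sum>j\<in>I. c j *\<^sub>R u j)"
  using assms by (simp add: mv_sum inner_sum_left inner_sum_right sum_distrib_left mult_ac) (rule trans[OF _ sum.swap], simp add: mult_ac)

lemma quad_sc:
  fixes c x y :: "'i \<Rightarrow> real"
  assumes "finite I"
  shows "(\<Sum>i\<in>I. \<Sum>j\<in>I. c i * c j * (P * (x i - y i) * (x j - y j))) = P * ((\<Sum>i\<in>I. c i * x i) - (\<Sum>i\<in>I. c i * y i))^2"
proof -
  have "(\<Sum>i\<in>I. c i * x i) - (\<Sum>i\<in>I. c i * y i) = (\<Sum>i\<in>I. c i * (x i - y i))"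
    by (simp add: sum_subtractf right_diff_distrib)
  then show ?thesis
    by (simp add: power2_eq_square sum_product sum_distrib_left mult_ac)
qed

lemma sum_axis: "(\<Sum>i\<in>UNIV. x$i *\<^sub>R axis i (1::real)) = x"
  by (simp add: vec_eq_iff axis_def if_distrib cong: if_cong)

lemma set_int_nonneg_AE:
  fixes f :: "'a \<Rightarrow> real"
  assumes "AE x in M. x \<in> A \<longrightarrow> 0 \<le> f x"
  shows "0 \<le> (\<integral>x\<in>A. f x \<partial>M)"
  unfolding set_lebesgue_integral_def
  by (rule integral_nonneg_AE) (use assms in \<open>auto simp: indicator_def elim!: eventually_mono\<close>)

lemma set_int_nonpos_AE:
  fixes f :: "'a \<Rightarrow> real"
  assumes "AE x in M. x \<in> A \<longrightarrow> f x \<le> 0"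
  shows "(\<integral>x\<in>A. f x \<partial>M) \<le> 0"
proof -
  have "0 \<le> (\<integral>x\<in>A. - f x \<partial>M)"
    by (rule set_int_nonneg_AE) (use assms in \<open>auto elim!: eventually_mono\<close>)
  then show ?thesis unfolding set_lebesgue_integral_def by simp
qed

lemma set_int_eq0_AE:
  fixes f :: "'a \<Rightarrow> real"
  assumes "set_integrable M A f" "AE x in M. x \<in> A \<longrightarrow> 0 \<le> f x" "(\<integral>x\<in>A. f x \<partial>M) = 0"
  shows "AE x in M. x \<in> A \<longrightarrow> f x = 0"
proof -
  have "AE x in M. indicator A x * f x = 0"
    using assms unfolding set_lebesgue_integral_def set_integrable_def
    by (subst integral_nonneg_eq_0_iff_AE[symmetric]) (auto simp: indicator_def elim!: eventually_mono)
  then show ?thesis by (auto simp: indicator_def elim!: eventually_mono)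
qed

lemma set_int_sum:
  fixes f :: "'i \<Rightarrow> 'a \<Rightarrow> 'b::{banach,second_countable_topology}"
  assumes "finite I" "\<And>i. i \<in> I \<Longrightarrow> set_integrable M A (f i)"
  shows "set_integrable M A (\<lambda>y. \<Sum>i\<in>I. f i y)"
  using assms unfolding set_integrable_def scaleR_sum_right by (intro Bochner_Integration.integrable_sum) auto

lemma sym_mv: "transpose A = A \<Longrightarrow> (A *v v) \<bullet> w = (A *v w) \<bullet> (v::real^'d)"
proof -
  assume t: "transpose A = A"
  have "A$k$l = A$l$k" for k l using t by (metis transpose_def vec_lambda_beta)
  then show ?thesis unfolding mvi by (subst sum.swap) (simp add: mult_ac)
qed

lemma swap3: "(\<Sum>i\<in>I. \<Sum>j\<in>J. x i j * (\<Sum>a\<in>K. F a i j)) = (\<Sum>a\<in>K. \<Sum>i\<in>I. \<Sum>j\<in>J. x i j * (F a i j::real))"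
proof -
  have "(\<Sum>i\<in>I. \<Sum>j\<in>J. x i j * (\<Sum>a\<in>K. F a i j)) = (\<Sum>i\<in>I. \<Sum>a\<in>K. \<Sum>j\<in>J. x i j * F a i j)"
    by (simp add: sum_distrib_left) (rule sum.cong[OF refl], rule sum.swap)
  also have "\<dots> = (\<Sum>a\<in>K. \<Sum>i\<in>I. \<Sum>j\<in>J. x i j * F a i j)" by (rule sum.swap)
  finally show ?thesis .
qed

lemma quad_form: "\<xi> \<bullet> (H *v \<xi>) = (\<Sum>i\<in>UNIV. \<Sum>j\<in>UNIV. \<xi>$i * \<xi>$j * H$i$j)"
  by (simp add: inner_commute[of \<xi>] mvi mult_ac)

lemma int_ug:
  fixes u :: "real^'d \<Rightarrow> real" and k :: 'd
  assumes u: "u \<in> borel_measurable lebesgue" "periodic u" "set_integrable lebesgue cellY u"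
  shows "integrable lebesgue (\<lambda>x. u x *\<^sub>R gtheta k x)"
proof -
  obtain Cb where bnd: "\<And>x. \<bar>theta k x\<bar> \<le> Cb \<and> norm (gtheta k x) \<le> Cb \<and> \<bar>rho0 k x\<bar> \<le> Cb"
    using theta_bounded[of k] by blast
  note [measurable] = u(1)
  show ?thesis
  proof (rule int_loc[OF u, of _ Cb k])
    show "(\<lambda>x. u x *\<^sub>R gtheta k x) \<in> borel_measurable lebesgue" by measurable
    fix x
    show "norm (u x *\<^sub>R gtheta k x) \<le> Cb * norm (u x)"
      using bnd[of x] mult_left_mono[of "norm (gtheta k x)" Cb "\<bar>u x\<bar>"] by (simp add: mult.commute)
    show "u x *\<^sub>R gtheta k x \<noteq> 0 \<Longrightarrow> region k x" using Sk_region[of k x] by auto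
  qed
qed

lemma int_tG:
  fixes G :: "real^'d \<Rightarrow> real^'d" and k :: 'd
  assumes G: "G \<in> borel_measurable lebesgue" "periodic G" "set_integrable lebesgue cellY G"
  shows "integrable lebesgue (\<lambda>x. theta k x *\<^sub>R G x)"
proof -
  obtain Cb where bnd: "\<And>x. \<bar>theta k x\<bar> \<le> Cb \<and> norm (gtheta k x) \<le> Cb \<and> \<bar>rho0 k x\<bar> \<le> Cb"
    using theta_bounded[of k] by blast
  note [measurable] = G(1)
  show ?thesis
  proof (rule int_loc[OF G, of _ Cb k])
    show "(\<lambda>x. theta k x *\<^sub>R G x) \<in> borel_measurable lebesgue" by measurable
    fix x
    show "norm (theta k x *\<^sub>R G x) \<le> Cb * norm (G x)"
      using bnd[of x] mult_right_mono[of "\<bar>theta k x\<bar>" Cb "norm (G x)"] by simp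
    show "theta k x *\<^sub>R G x \<noteq> 0 \<Longrightarrow> region k x" using Sk_region[of k x] by auto
  qed
qed

theorem lemma6p3:
  fixes rho :: "'n::finite \<Rightarrow> real^'d \<Rightarrow> real"
    and b :: "'n \<Rightarrow> real^'d \<Rightarrow> real^'d"
    and divb :: "'n \<Rightarrow> real^'d \<Rightarrow> real"
    and Dm :: "'n \<Rightarrow> real^'d \<Rightarrow> real^'d^'d"
    and PP :: "'n \<Rightarrow> 'n \<Rightarrow> real^'d \<Rightarrow> real"
    and lam :: real
    and phi phis :: "'n \<Rightarrow> real^'d \<Rightarrow> real"
    and gphi gphis :: "'n \<Rightarrow> real^'d \<Rightarrow> real^'d"
    and om :: "'d \<Rightarrow> 'n \<Rightarrow> real^'d \<Rightarrow> real"
    and gom :: "'d \<Rightarrow> 'n \<Rightarrow> real^'d \<Rightarrow> real^'d"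
  assumes rho: "\<And>a. Linf_per (rho a)" "\<And>a. \<exists>c>0. AE y in lebesgue. rho a y \<ge> c"
    and b: "\<And>a. Linf_per (b a)" "\<And>a. Linf_per (divb a)" "\<And>a. weak_div (b a) (divb a)"
    and Dm: "\<And>a. Linf_per (Dm a)" "\<And>a. AE y in lebesgue. transpose (Dm a y) = Dm a y"
      "\<And>a. \<exists>c>0. AE y in lebesgue. \<forall>\<xi>. (Dm a y *v \<xi>) \<bullet> \<xi> \<ge> c * (norm \<xi>)\<^sup>2"
    and PP: "\<And>a c. Linf_per (PP a c)" "\<And>a c. a \<noteq> c \<Longrightarrow> AE y in lebesgue. PP a c y \<le> 0"
      "irreducible_coupling PP"
    and phi: "\<And>a. H1_per (phi a) (gphi a)" "\<And>a. Linf_per (phi a)"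
      "\<And>a. AE y in lebesgue. phi a y > 0"
    and phis: "\<And>a. H1_per (phis a) (gphis a)" "\<And>a. Linf_per (phis a)"
      "\<And>a. AE y in lebesgue. phis a y > 0"
    and eig: "\<And>a v gv. C1_per v gv \<Longrightarrow>
      (\<integral>y\<in>cellY. (b a y \<bullet> gphi a y) * v y + (Dm a y *v gphi a y) \<bullet> gv y
          + (\<Sum>c\<in>UNIV. PP a c y * phi c y) * v y \<partial>lebesgue)
      = lam * (\<integral>y\<in>cellY. rho a y * phi a y * v y \<partial>lebesgue)"
    and eig_adj: "\<And>a v gv. C1_per v gv \<Longrightarrow>
      (\<integral>y\<in>cellY. phis a y * (b a y \<bullet> gv y) + (Dm a y *v gphis a y) \<bullet> gv y
          + (\<Sum>c\<in>UNIV. PP c a y * phis c y) * v y \<partial>lebesgue)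
      = lam * (\<integral>y\<in>cellY. rho a y * phis a y * v y \<partial>lebesgue)"
    and norm1: "(\<Sum>a\<in>UNIV. (\<integral>y\<in>cellY. rho a y * phi a y * phis a y \<partial>lebesgue)) = 1"
    and om: "\<And>i a. H1_per (om i a) (gom i a)"
    and cell: "\<And>i a v gv. C1_per v gv \<Longrightarrow>
      (\<integral>y\<in>cellY. (btil b Dm phi gphi phis gphis a y \<bullet> (gom i a y + axis i 1)) * v y
          + (Dtil Dm phi phis a y *v (gom i a y + axis i 1)) \<bullet> gv y
          + (\<Sum>c\<in>UNIV. PP a c y * phis a y * phi c y * (om i c y - om i a y)) * v y \<partial>lebesgue)
      = (\<integral>y\<in>cellY. phi a y * phis a y * rho a y * (bstar b Dm phi gphi phis gphis \<bullet> axis i 1)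
            * v y \<partial>lebesgue)"
  shows "sym_pos_def (homD Dm PP phi phis om gom)"
proof -
  define U where "U i a y = gom i a y + axis i 1" for i a y
  define Dt where "Dt a y = Dtil Dm phi phis a y" for a y
  define Pc where "Pc a c y = phis a y * phi c y * PP a c y" for a c y
  define f1 where "f1 i j a y = (Dt a y *v U i a y) \<bullet> U j a y" for i j a y
  define f2 where "f2 i j a c y = Pc a c y * (om i a y - om i c y) * (om j a y - om j c y)" for i j a c y
  define H where "H = homD Dm PP phi phis om gom"
  have Hij: "H$i$j = (\<Sum>a\<in>UNIV. (\<integral>y\<in>cellY. f1 i j a y \<partial>lebesgue)) - 1/2 * (\<Sum>a\<in>UNIV. \<Sum>c\<in>UNIV. (\<integral>y\<in>cellY. f2 i j a c y \<partial>lebesgue))" for i j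
    unfolding H_def homD_def f1_def f2_def U_def Dt_def Pc_def by simp
  have m1: "\<And>a. phi a \<in> borel_measurable lebesgue" using phi(2) unfolding Linf_per_def by blast
  have m2: "\<And>a. phis a \<in> borel_measurable lebesgue" using phis(2) unfolding Linf_per_def by blast
  have m3: "\<And>a. Dm a \<in> borel_measurable lebesgue" using Dm(1) unfolding Linf_per_def by blast
  have m4: "\<And>a c. PP a c \<in> borel_measurable lebesgue" using PP(1) unfolding Linf_per_def by blast
  have m5: "\<And>i a. om i a \<in> borel_measurable lebesgue" using om unfolding H1_per_def by blast
  have m6: "\<And>i a. gom i a \<in> borel_measurable lebesgue" using om unfolding H1_per_def by blast
  note [measurable] = m1 m2 m3 m4 m5 m6
  have m7: "\<And>a. Dt a \<in> borel_measurable lebesgue" unfolding Dt_def[abs_def] Dtil_def by measurable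
  have m8: "\<And>a c. Pc a c \<in> borel_measurable lebesgue" unfolding Pc_def[abs_def] by measurable
  have m9: "\<And>i a. U i a \<in> borel_measurable lebesgue" unfolding U_def[abs_def] by measurable
  note [measurable] = m7 m8 m9
  have "\<forall>a. \<exists>M. AE y in lebesgue. norm (phi a y) \<le> M" using phi(2) unfolding Linf_per_def by blast
  then obtain Bphi where Bphi: "\<And>a. AE y in lebesgue. norm (phi a y) \<le> Bphi a"
    using choice[of "\<lambda>a M. AE y in lebesgue. norm (phi a y) \<le> M"] by blast
  have "\<forall>a. \<exists>M. AE y in lebesgue. norm (phis a y) \<le> M" using phis(2) unfolding Linf_per_def by blast
  then obtain Bphis where Bphis: "\<And>a. AE y in lebesgue. norm (phis a y) \<le> Bphis a"
    using choice[of "\<lambda>a M. AE y in lebesgue. norm (phis a y) \<le> M"] by blast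
  have "\<forall>a. \<exists>M. AE y in lebesgue. norm (Dm a y) \<le> M" using Dm(1) unfolding Linf_per_def by blast
  then obtain BD where BD: "\<And>a. AE y in lebesgue. norm (Dm a y) \<le> BD a"
    using choice[of "\<lambda>a M. AE y in lebesgue. norm (Dm a y) \<le> M"] by blast
  have "\<forall>p. \<exists>M. AE y in lebesgue. norm (PP (fst p) (snd p) y) \<le> M" using PP(1) unfolding Linf_per_def by blast
  then obtain BP' where BP': "\<And>p. AE y in lebesgue. norm (PP (fst p) (snd p) y) \<le> BP' p"
    using choice[of "\<lambda>p M. AE y in lebesgue. norm (PP (fst p) (snd p) y) \<le> M"] by blast
  define BP where "BP a c = BP' (a, c)" for a c
  have BP: "\<And>a c. AE y in lebesgue. norm (PP a c y) \<le> BP a c" using BP'[of "(a,c)" for a c] unfolding BP_def by simp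
  have "\<forall>a. \<exists>c>0. AE y in lebesgue. \<forall>\<xi>. (Dm a y *v \<xi>) \<bullet> \<xi> \<ge> c * (norm \<xi>)\<^sup>2" using Dm(3) by blast
  then obtain cD where cD: "\<And>a. cD a > 0" "\<And>a. AE y in lebesgue. \<forall>\<xi>. (Dm a y *v \<xi>) \<bullet> \<xi> \<ge> cD a * (norm \<xi>)\<^sup>2"
    using choice[of "\<lambda>a c. c > 0 \<and> (AE y in lebesgue. \<forall>\<xi>. (Dm a y *v \<xi>) \<bullet> \<xi> \<ge> c * (norm \<xi>)\<^sup>2)"] by blast
  have BDt: "AE y in lebesgue. norm (Dt a y) \<le> Bphi a * Bphis a * BD a" for a
    using Bphi[of a] Bphis[of a] BD[of a]
  proof eventually_elim
    case (elim y)
    have "norm (Dt a y) = \<bar>phi a y\<bar> * \<bar>phis a y\<bar> * norm (Dm a y)"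
      unfolding Dt_def Dtil_def by (simp add: abs_mult)
    also have "\<dots> \<le> Bphi a * Bphis a * BD a" using elim
      by (intro mult_mono) (auto intro: mult_nonneg_nonneg order_trans[OF abs_ge_zero])
    finally show ?case .
  qed
  have BPc: "AE y in lebesgue. \<bar>Pc a c y\<bar> \<le> Bphis a * Bphi c * BP a c" for a c
    using Bphi[of c] Bphis[of a] BP[of a c]
  proof eventually_elim
    case (elim y)
    have "\<bar>Pc a c y\<bar> = \<bar>phis a y\<bar> * \<bar>phi c y\<bar> * \<bar>PP a c y\<bar>"
      unfolding Pc_def by (simp add: abs_mult)
    also have "\<dots> \<le> Bphis a * Bphi c * BP a c" using elim
      by (intro mult_mono) (auto intro: mult_nonneg_nonneg order_trans[OF abs_ge_zero])
    finally show ?case .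
  qed
  have sq_om: "set_integrable lebesgue cellY (\<lambda>y. (norm (om i a y))^2)" for i a
    using om[of i a] unfolding H1_per_def by simp
  have sq_gom: "set_integrable lebesgue cellY (\<lambda>y. (norm (gom i a y))^2)" for i a
    using om[of i a] unfolding H1_per_def by simp
  have sq_U: "set_integrable lebesgue cellY (\<lambda>y. (norm (U i a y))^2)" for i a
    unfolding U_def
    by (rule set_int_sq_shift) (use sq_gom set_int_const[of 1] in \<open>auto\<close>)
  have sq_omd: "set_integrable lebesgue cellY (\<lambda>y. (norm (om i a y - om i c y))^2)" for i a c
  proof -
    have "set_integrable lebesgue cellY (\<lambda>y. (norm (om i a y + (- om i c y)))^2)"
      by (rule set_int_sq_shift) (use sq_om in auto)
    then show ?thesis by simp
  qed
  have int1: "set_integrable lebesgue cellY (f1 i j a)" for i j a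
    unfolding f1_def[abs_def] by (rule bil_int[OF _ _ _ BDt sq_U sq_U]) measurable
  have int2: "set_integrable lebesgue cellY (f2 i j a c)" for i j a c
    unfolding f2_def[abs_def] by (rule tri_int[OF _ _ _ BPc sq_omd sq_omd]) measurable
  have smv: "((c::real) *\<^sub>R A *v v) \<bullet> w = c * ((A *v v) \<bullet> w)" for c A and v w :: "real^'d"
    by (simp add: scaleR_matrix_vector_assoc[symmetric])
  have f1m: "f1 i j a \<in> borel_measurable lebesgue" for i j a unfolding f1_def[abs_def] by measurable
  have f1sym: "AE y in lebesgue. f1 j i a y = f1 i j a y" for i j a
    using Dm(2)[of a] by eventually_elim (simp add: f1_def Dt_def Dtil_def smv sym_mv[of "Dm a _"])
  have f2sym: "f2 j i = f2 i j" for i j by (simp add: f2_def mult_ac fun_eq_iff)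
  have Hsym: "H$j$i = H$i$j" for i j
  proof -
    have "(\<integral>y\<in>cellY. f1 j i a y \<partial>lebesgue) = (\<integral>y\<in>cellY. f1 i j a y \<partial>lebesgue)" for a
      by (rule set_lebesgue_integral_cong_AE) (use f1m f1sym[of j i a] in \<open>auto elim!: eventually_mono\<close>)
    then show ?thesis unfolding Hij f2sym[of j i] by simp
  qed
  have sym: "transpose H = H" by (simp add: vec_eq_iff transpose_def Hsym)
  define W where "W \<xi> a y = (\<Sum>i\<in>UNIV. (\<xi>::real^'d)$i *\<^sub>R U i a y)" for \<xi> a y
  define wv where "wv \<xi> a y = (\<Sum>i\<in>UNIV. (\<xi>::real^'d)$i * om i a y)" for \<xi> a y
  have pw1: "(\<Sum>i\<in>UNIV. \<Sum>j\<in>UNIV. \<xi>$i * \<xi>$j * f1 i j a y) = (Dt a y *v W \<xi> a y) \<bullet> W \<xi> a y" for \<xi> a y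
    unfolding f1_def W_def by (rule quad_mv) simp
  have pw2: "(\<Sum>i\<in>UNIV. \<Sum>j\<in>UNIV. \<xi>$i * \<xi>$j * f2 i j a c y) = Pc a c y * (wv \<xi> a y - wv \<xi> c y)^2" for \<xi> a c y
    unfolding f2_def wv_def by (rule quad_sc) simp
  have Qexp: "\<xi> \<bullet> (H *v \<xi>) = (\<Sum>a\<in>UNIV. (\<integral>y\<in>cellY. (Dt a y *v W \<xi> a y) \<bullet> W \<xi> a y \<partial>lebesgue))
     - 1/2 * (\<Sum>a\<in>UNIV. \<Sum>c\<in>UNIV. (\<integral>y\<in>cellY. Pc a c y * (wv \<xi> a y - wv \<xi> c y)^2 \<partial>lebesgue))" for \<xi>
  proof -
    have "\<xi> \<bullet> (H *v \<xi>) = (\<Sum>i\<in>UNIV. \<Sum>j\<in>UNIV. \<xi>$i * \<xi>$j * H$i$j)" by (rule quad_form)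
    also have "\<dots> = (\<Sum>i\<in>UNIV. \<Sum>j\<in>UNIV. \<xi>$i * \<xi>$j * (\<Sum>a\<in>UNIV. (\<integral>y\<in>cellY. f1 i j a y \<partial>lebesgue)))
       - 1/2 * (\<Sum>i\<in>UNIV. \<Sum>j\<in>UNIV. \<xi>$i * \<xi>$j * (\<Sum>a\<in>UNIV. \<Sum>c\<in>UNIV. (\<integral>y\<in>cellY. f2 i j a c y \<partial>lebesgue)))"
      by (simp add: Hij right_diff_distrib sum_subtractf sum_distrib_left mult_ac)
    also have "(\<Sum>i\<in>UNIV. \<Sum>j\<in>UNIV. \<xi>$i * \<xi>$j * (\<Sum>a\<in>UNIV. (\<integral>y\<in>cellY. f1 i j a y \<partial>lebesgue)))
        = (\<Sum>a\<in>UNIV. \<Sum>i\<in>UNIV. \<Sum>j\<in>UNIV. \<xi>$i * \<xi>$j * (\<integral>y\<in>cellY. f1 i j a y \<partial>lebesgue))"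
      by (rule swap3)
    also have "\<dots> = (\<Sum>a\<in>UNIV. (\<integral>y\<in>cellY. (Dt a y *v W \<xi> a y) \<bullet> W \<xi> a y \<partial>lebesgue))"
    proof (rule sum.cong[OF refl])
      fix a
      show "(\<Sum>i\<in>UNIV. \<Sum>j\<in>UNIV. \<xi>$i * \<xi>$j * (\<integral>y\<in>cellY. f1 i j a y \<partial>lebesgue))
         = (\<integral>y\<in>cellY. (Dt a y *v W \<xi> a y) \<bullet> W \<xi> a y \<partial>lebesgue)"
        using set_int_lin2[of UNIV UNIV lebesgue cellY "\<lambda>i j. f1 i j a" "\<lambda>i j. \<xi>$i * \<xi>$j"] int1
        by (simp add: pw1)
    qed
    also have "(\<Sum>i\<in>UNIV. \<Sum>j\<in>UNIV. \<xi>$i * \<xi>$j * (\<Sum>a\<in>UNIV. \<Sum>c\<in>UNIV. (\<integral>y\<in>cellY. f2 i j a c y \<partial>lebesgue)))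
        = (\<Sum>a\<in>UNIV. \<Sum>c\<in>UNIV. \<Sum>i\<in>UNIV. \<Sum>j\<in>UNIV. \<xi>$i * \<xi>$j * (\<integral>y\<in>cellY. f2 i j a c y \<partial>lebesgue))"
      by (simp only: swap3)
    also have "\<dots> = (\<Sum>a\<in>UNIV. \<Sum>c\<in>UNIV. (\<integral>y\<in>cellY. Pc a c y * (wv \<xi> a y - wv \<xi> c y)^2 \<partial>lebesgue))"
    proof (intro sum.cong[OF refl])
      fix a c
      show "(\<Sum>i\<in>UNIV. \<Sum>j\<in>UNIV. \<xi>$i * \<xi>$j * (\<integral>y\<in>cellY. f2 i j a c y \<partial>lebesgue))
         = (\<integral>y\<in>cellY. Pc a c y * (wv \<xi> a y - wv \<xi> c y)^2 \<partial>lebesgue)"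
        using set_int_lin2[of UNIV UNIV lebesgue cellY "\<lambda>i j. f2 i j a c" "\<lambda>i j. \<xi>$i * \<xi>$j"] int2
        by (simp add: pw2)
    qed
    finally show ?thesis .
  qed
  have N2: "(\<integral>y\<in>cellY. Pc a c y * (wv \<xi> a y - wv \<xi> c y)^2 \<partial>lebesgue) \<le> 0" for \<xi> a c
  proof (cases "a = c")
    case True
    then show ?thesis by simp
  next
    case False
    show ?thesis
    proof (rule set_int_nonpos_AE)
      show "AE y in lebesgue. y \<in> cellY \<longrightarrow> Pc a c y * (wv \<xi> a y - wv \<xi> c y)^2 \<le> 0"
        using PP(2)[OF False] phis(3)[of a] phi(3)[of c]
      proof eventually_elim
        case (elim y)
        then have "Pc a c y \<le> 0" unfolding Pc_def
          by (intro mult_nonneg_nonpos) auto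
        then show ?case by (simp add: mult_nonpos_nonneg)
      qed
    qed
  qed
  have N1: "AE y in lebesgue. \<forall>w. (Dt a y *v w) \<bullet> w \<ge> phi a y * phis a y * (cD a * (norm w)^2)" for a
    using cD(2)[of a] phi(3)[of a] phis(3)[of a]
  proof eventually_elim
    case (elim y)
    show ?case
    proof
      fix w
      have "(Dt a y *v w) \<bullet> w = (phi a y * phis a y) * ((Dm a y *v w) \<bullet> w)"
        unfolding Dt_def Dtil_def by (simp add: smv)
      also have "\<dots> \<ge> (phi a y * phis a y) * (cD a * (norm w)^2)"
        using elim by (intro mult_left_mono) auto
      finally show "(Dt a y *v w) \<bullet> w \<ge> phi a y * phis a y * (cD a * (norm w)^2)" by simp
    qed
  qed
  have N1': "AE y in lebesgue. (Dt a y *v w y) \<bullet> w y \<ge> 0" for a w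
    using N1[of a] phi(3)[of a] phis(3)[of a]
  proof eventually_elim
    case (elim y)
    have "0 \<le> phi a y * phis a y * (cD a * (norm (w y))^2)" using elim cD(1)[of a] by simp
    then show ?case using elim by (meson order_trans)
  qed
  have Jnn: "0 \<le> (\<integral>y\<in>cellY. (Dt a y *v W \<xi> a y) \<bullet> W \<xi> a y \<partial>lebesgue)" for \<xi> a
    by (rule set_int_nonneg_AE) (use N1'[of a "W \<xi> a"] in \<open>auto elim!: eventually_mono\<close>)
  have Jint: "set_integrable lebesgue cellY (\<lambda>y. (Dt a y *v W \<xi> a y) \<bullet> W \<xi> a y)" for \<xi> a
  proof -
    have "set_integrable lebesgue cellY (\<lambda>y. \<Sum>i\<in>UNIV. \<Sum>j\<in>UNIV. \<xi>$i * \<xi>$j * f1 i j a y)"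
      using int1 by (intro set_int_sum set_integrable_mult_right) auto
    then show ?thesis by (simp add: pw1)
  qed
  have om_per: "periodic (om i a)" "periodic (gom i a)" for i a
    using om[of i a] unfolding H1_per_def by auto
  have om_L1: "set_integrable lebesgue cellY (om i a)" for i a
    by (rule set_int_L1) (use sq_om in auto)
  have gom_L1: "set_integrable lebesgue cellY (gom i a)" for i a
    by (rule set_int_L1) (use sq_gom in auto)
  have wg_i: "(\<integral>x. om i a x *\<^sub>R gtheta k x \<partial>lebesgue) = - (\<integral>x. theta k x *\<^sub>R gom i a x \<partial>lebesgue)" for i a k
    using om[of i a] theta_C1c[of k] unfolding H1_per_def weak_grad_def by blast
  have pos: "\<xi> \<bullet> (H *v \<xi>) > 0" if \<xi>0: "\<xi> \<noteq> 0" for \<xi>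
  proof (rule ccontr)
    assume np: "\<not> \<xi> \<bullet> (H *v \<xi>) > 0"
    obtain a0 :: 'n where True by blast
    define J where "J a = (\<integral>y\<in>cellY. (Dt a y *v W \<xi> a y) \<bullet> W \<xi> a y \<partial>lebesgue)" for a
    have "J a0 \<le> (\<Sum>a\<in>UNIV. J a)" by (rule member_le_sum) (auto simp: J_def Jnn)
    moreover have "(\<Sum>a\<in>UNIV. \<Sum>c\<in>UNIV. (\<integral>y\<in>cellY. Pc a c y * (wv \<xi> a y - wv \<xi> c y)^2 \<partial>lebesgue)) \<le> 0"
      by (intro sum_nonpos N2)
    ultimately have "J a0 \<le> \<xi> \<bullet> (H *v \<xi>)" unfolding Qexp J_def by linarith
    then have J0: "J a0 = 0" using np Jnn[where \<xi>=\<xi> and a=a0] unfolding J_def by linarith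
    have "AE y in lebesgue. y \<in> cellY \<longrightarrow> (Dt a0 y *v W \<xi> a0 y) \<bullet> W \<xi> a0 y = 0"
      by (rule set_int_eq0_AE[OF Jint]) (use N1'[of a0 "W \<xi> a0"] J0 J_def in \<open>auto elim!: eventually_mono\<close>)
    then have AEW: "AE y in lebesgue. y \<in> cellY \<longrightarrow> W \<xi> a0 y = 0"
      using N1[of a0] phi(3)[of a0] phis(3)[of a0]
    proof eventually_elim
      case (elim y)
      show ?case
      proof
        assume y: "y \<in> cellY"
        have "phi a0 y * phis a0 y * (cD a0 * (norm (W \<xi> a0 y))^2) \<le> (Dt a0 y *v W \<xi> a0 y) \<bullet> W \<xi> a0 y"
          using elim(2) by blast
        then have "phi a0 y * phis a0 y * (cD a0 * (norm (W \<xi> a0 y))^2) \<le> 0" using elim(1) y by simp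
        moreover have "phi a0 y * phis a0 y * cD a0 > 0" using elim cD(1)[of a0] by simp
        ultimately have "(norm (W \<xi> a0 y))^2 \<le> 0"
          by (metis mult.assoc mult_le_0_iff not_le mult_pos_pos less_le_trans order.refl)
        then show "W \<xi> a0 y = 0" by simp
      qed
    qed
    define G where "G y = (\<Sum>i\<in>UNIV. \<xi>$i *\<^sub>R gom i a0 y)" for y
    have WG: "W \<xi> a0 y = G y + \<xi>" for y
      unfolding W_def U_def G_def by (simp add: scaleR_add_right sum.distrib sum_axis)
    have Gc: "AE y in lebesgue. y \<in> cellY \<longrightarrow> G y = - \<xi>"
      using AEW by eventually_elim (auto simp: WG eq_neg_iff_add_eq_0)
    have Gm: "G \<in> borel_measurable lebesgue" unfolding G_def[abs_def] by measurable
    have um: "wv \<xi> a0 \<in> borel_measurable lebesgue" unfolding wv_def[abs_def] by measurable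
    have Gp: "periodic G" using om_per unfolding periodic_def G_def by simp
    have up: "periodic (wv \<xi> a0)" using om_per unfolding periodic_def wv_def by simp
    have GL: "set_integrable lebesgue cellY G"
      unfolding G_def[abs_def] using gom_L1 by (intro set_int_sum set_integrable_scaleR_right) auto
    have uL: "set_integrable lebesgue cellY (wv \<xi> a0)"
      unfolding wv_def[abs_def] using om_L1 by (intro set_int_sum set_integrable_mult_right) auto
    have "(- \<xi>) $ k = 0" for k
    proof (rule core[OF um up uL Gm Gp GL Gc])
      have i1: "integrable lebesgue (\<lambda>x. om i a0 x *\<^sub>R gtheta k x)" for i
        by (rule int_ug) (use om_L1 om_per in auto)
      have i2: "integrable lebesgue (\<lambda>x. theta k x *\<^sub>R gom i a0 x)" for i
        by (rule int_tG) (use gom_L1 om_per in auto)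
      have "(\<integral>x. wv \<xi> a0 x *\<^sub>R gtheta k x \<partial>lebesgue) = (\<integral>x. (\<Sum>i\<in>UNIV. \<xi>$i *\<^sub>R (om i a0 x *\<^sub>R gtheta k x)) \<partial>lebesgue)"
        unfolding wv_def by (simp add: scaleR_sum_left)
      also have "\<dots> = (\<Sum>i\<in>UNIV. \<xi>$i *\<^sub>R (\<integral>x. om i a0 x *\<^sub>R gtheta k x \<partial>lebesgue))"
        by (subst Bochner_Integration.integral_sum) (use i1 in \<open>simp_all del: scaleR_scaleR\<close>)
      also have "\<dots> = - (\<Sum>i\<in>UNIV. \<xi>$i *\<^sub>R (\<integral>x. theta k x *\<^sub>R gom i a0 x \<partial>lebesgue))"
        by (simp add: wg_i sum_negf)
      also have "(\<Sum>i\<in>UNIV. \<xi>$i *\<^sub>R (\<integral>x. theta k x *\<^sub>R gom i a0 x \<partial>lebesgue)) = (\<integral>x. (\<Sum>i\<in>UNIV. \<xi>$i *\<^sub>R (theta k x *\<^sub>R gom i a0 x)) \<partial>lebesgue)"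
        by (subst Bochner_Integration.integral_sum) (use i2 in \<open>simp_all del: scaleR_scaleR\<close>)
      also have "\<dots> = (\<integral>x. theta k x *\<^sub>R G x \<partial>lebesgue)"
        unfolding G_def by (simp add: scaleR_sum_right mult.commute)
      finally show "(\<integral>x. wv \<xi> a0 x *\<^sub>R gtheta k x \<partial>lebesgue) = - (\<integral>x. theta k x *\<^sub>R G x \<partial>lebesgue)" .
    qed
    then have "\<xi> = 0" by (simp add: vec_eq_iff)
    with \<xi>0 show False by simp
  qed
  show ?thesis unfolding sym_pos_def_def H_def[symmetric] using sym pos by auto
qed

end
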